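(* Let $\{M^A_\alpha\}_{\alpha=1}^{d_A^2}$ be a GSICPOVM on $\mathbb{C}^{d_A}$ with parameter $a_A$ and $\{M^B_\beta\}_{\beta=1}^{d_B^2}$ a GSICPOVM on $\mathbb{C}^{d_B}$ with parameter $a_B$. Let $\mu,\nu\in\mathbb{R}$ and $l$ a positive integer. If a state $\rho_{AB}$ on $\mathbb{C}^{d_A}\otimes\mathbb{C}^{d_B}$ is separable, then $$\left\|\mathcal{M}^l_{\mu,\nu}(\rho_{AB})\right\|_{\mathrm{tr}}\le\sqrt{\left(l\mu^2+\frac{a_Ad_A^2+1}{d_A(d_A+1)}\right)\left(l\nu^2+\frac{a_Bd_B^2+1}{d_B(d_B+1)}\right)},$$ where $$\mathcal{M}^l_{\mu,\nu}(\rho_{AB})=\begin{pmatrix}\mu\nu J_{l\times l}&\mu\,\omega_l(\zeta)^T\\ \nu\,\omega_l(\varsigma)&\mathcal{G}(\rho_{AB})\end{pmatrix}.$$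
   Context: A GSICPOVM (general symmetric informationally complete POVM) on $\mathbb{C}^d$ is a POVM of $d^2$ positive semidefinite operators $\{M_k\}_{k=1}^{d^2}$ summing to $I_d$ with $\mathrm{tr}(M_k)=1/d$, $\mathrm{tr}(M_k^2)=a$, $\mathrm{tr}(M_kM_l)=\frac{1-da}{d(d^2-1)}$ for $l\ne k$, where $\frac1{d^3}<a\le\frac1{d^2}$. A state is separable if it is a convex combination of product states $\rho_A^i\otimes\rho_B^i$. $\rho_A,\rho_B$ are the reduced states. $\varsigma\in\mathbb{R}^{d_A^2}$ has entries $\mathrm{tr}(M^A_\alpha\rho_A)$, $\zeta\in\mathbb{R}^{d_B^2}$ has entries $\mathrm{tr}(M^B_\beta\rho_B)$, and $\mathcal{G}(\rho_{AB})$ is the $d_A^2\times d_B^2$ matrix with entries $\mathrm{tr}[(M^A_\alpha\otimes M^B_\beta)\rho_{AB}]$ (row $\alpha$, column $\beta$). $J_{l\times l}$ is the $l\times l$ all-ones matrix; for a column vector $X$, $\omega_l(X)=(X,\dots,X)$ is the matrix with $l$ columns equal to $X$. $\|G\|_{\mathrm{tr}}=\mathrm{tr}\sqrt{G^\dagger G}$. *)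

theory Defs
  imports "Jordan_Normal_Form.Schur_Decomposition"
begin

definition mtrace :: "complex mat \<Rightarrow> complex" where
  "mtrace A = (\<Sum>i<dim_row A. A $$ (i, i))"

definition is_psd :: "nat \<Rightarrow> complex mat \<Rightarrow> bool" where
  "is_psd n A \<longleftrightarrow> A \<in> carrier_mat n n \<and> mat_adjoint A = A \<and>
     (\<forall>v \<in> carrier_vec n. 0 \<le> Re (conjugate v \<bullet> (A *\<^sub>v v)))"

definition is_density :: "nat \<Rightarrow> complex mat \<Rightarrow> bool" where
  "is_density n \<rho> \<longleftrightarrow> is_psd n \<rho> \<and> mtrace \<rho> = 1"

definition is_GSICPOVM :: "nat \<Rightarrow> real \<Rightarrow> (nat \<Rightarrow> complex mat) \<Rightarrow> bool" where
  "is_GSICPOVM d a M \<longleftrightarrow>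
     1 / real d ^ 3 < a \<and> a \<le> 1 / real d ^ 2 \<and>
     (\<forall>k < d^2. is_psd d (M k)) \<and>
     (\<forall>i < d. \<forall>j < d. (\<Sum>k < d^2. M k $$ (i, j)) = (1\<^sub>m d) $$ (i, j)) \<and>
     (\<forall>k < d^2. mtrace (M k) = complex_of_real (1 / real d)) \<and>
     (\<forall>k < d^2. mtrace (M k * M k) = complex_of_real a) \<and>
     (\<forall>k < d^2. \<forall>l < d^2. k \<noteq> l \<longrightarrow>
        mtrace (M k * M l) = complex_of_real ((1 - real d * a) / (real d * (real d ^ 2 - 1))))"

(* Kronecker (tensor) product; basis index of e_i \<otimes> e_j is i * dim + j *)
definition kron :: "complex mat \<Rightarrow> complex mat \<Rightarrow> complex mat" where
  "kron A B = mat (dim_row A * dim_row B) (dim_col A * dim_col B)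
     (\<lambda>(r, c). A $$ (r div dim_row B, c div dim_col B) * B $$ (r mod dim_row B, c mod dim_col B))"

definition separable :: "nat \<Rightarrow> nat \<Rightarrow> complex mat \<Rightarrow> bool" where
  "separable dA dB \<rho> \<longleftrightarrow>
     (\<exists>(n::nat) (p :: nat \<Rightarrow> real) \<rho>A \<rho>B.
        (\<forall>i<n. 0 \<le> p i) \<and> (\<Sum>i<n. p i) = 1 \<and>
        (\<forall>i<n. is_density dA (\<rho>A i) \<and> is_density dB (\<rho>B i)) \<and>
        \<rho> = mat (dA * dB) (dA * dB)
              (\<lambda>(r, c). \<Sum>i<n. complex_of_real (p i) * kron (\<rho>A i) (\<rho>B i) $$ (r, c)))"

definition ptrace_B :: "nat \<Rightarrow> nat \<Rightarrow> complex mat \<Rightarrow> complex mat" where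
  "ptrace_B dA dB \<rho> = mat dA dA (\<lambda>(i, j). \<Sum>k<dB. \<rho> $$ (i * dB + k, j * dB + k))"

definition ptrace_A :: "nat \<Rightarrow> nat \<Rightarrow> complex mat \<Rightarrow> complex mat" where
  "ptrace_A dA dB \<rho> = mat dB dB (\<lambda>(i, j). \<Sum>k<dA. \<rho> $$ (k * dB + i, k * dB + j))"

definition varsigma :: "nat \<Rightarrow> nat \<Rightarrow> (nat \<Rightarrow> complex mat) \<Rightarrow> complex mat \<Rightarrow> complex vec" where
  "varsigma dA dB MA \<rho> = vec (dA^2) (\<lambda>\<alpha>. mtrace (MA \<alpha> * ptrace_B dA dB \<rho>))"

definition zeta :: "nat \<Rightarrow> nat \<Rightarrow> (nat \<Rightarrow> complex mat) \<Rightarrow> complex mat \<Rightarrow> complex vec" where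
  "zeta dA dB MB \<rho> = vec (dB^2) (\<lambda>\<beta>. mtrace (MB \<beta> * ptrace_A dA dB \<rho>))"

definition corrG :: "nat \<Rightarrow> nat \<Rightarrow> (nat \<Rightarrow> complex mat) \<Rightarrow> (nat \<Rightarrow> complex mat) \<Rightarrow> complex mat \<Rightarrow> complex mat" where
  "corrG dA dB MA MB \<rho> = mat (dA^2) (dB^2) (\<lambda>(\<alpha>, \<beta>). mtrace (kron (MA \<alpha>) (MB \<beta>) * \<rho>))"

definition Jmat :: "nat \<Rightarrow> complex mat" where
  "Jmat l = mat l l (\<lambda>_. 1)"

definition omega :: "nat \<Rightarrow> complex vec \<Rightarrow> complex mat" where
  "omega l X = mat (dim_vec X) l (\<lambda>(i, j). X $ i)"

definition Mmat :: "nat \<Rightarrow> real \<Rightarrow> real \<Rightarrow> nat \<Rightarrow> nat \<Rightarrow> (nat \<Rightarrow> complex mat) \<Rightarrow> (nat \<Rightarrow> complex mat) \<Rightarrow> complex mat \<Rightarrow> complex mat" where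
  "Mmat l \<mu> \<nu> dA dB MA MB \<rho> =
     four_block_mat (complex_of_real (\<mu> * \<nu>) \<cdot>\<^sub>m Jmat l)
                    (complex_of_real \<mu> \<cdot>\<^sub>m transpose_mat (omega l (zeta dA dB MB \<rho>)))
                    (complex_of_real \<nu> \<cdot>\<^sub>m omega l (varsigma dA dB MA \<rho>))
                    (corrG dA dB MA MB \<rho>)"

definition psd_sqrt :: "complex mat \<Rightarrow> complex mat" where
  "psd_sqrt P = (THE S. is_psd (dim_row P) S \<and> S * S = P)"

definition trace_norm :: "complex mat \<Rightarrow> real" where
  "trace_norm G = Re (mtrace (psd_sqrt (mat_adjoint G * G)))"

end

theory Submission
  imports Defs "Jordan_Normal_Form.Spectral_Radius"
begin


lemma adj_dim[simp]: "dim_row (mat_adjoint A) = dim_col A" "dim_col (mat_adjoint A) = dim_row A"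
  unfolding mat_adjoint_def by (simp_all add: mat_of_rows_def)

lemma adj_idx[simp]: fixes A :: "complex mat" shows "i < dim_col A \<Longrightarrow> j < dim_row A \<Longrightarrow> mat_adjoint A $$ (i,j) = cnj (A $$ (j,i))"
  unfolding mat_adjoint_def mat_of_rows_def by simp

lemma adj_carrier[simp]: "A \<in> carrier_mat n m \<Longrightarrow> mat_adjoint A \<in> carrier_mat m n"
  unfolding carrier_mat_def by (simp only: mem_Collect_eq adj_dim)

lemma mult_idx: "A \<in> carrier_mat nr n \<Longrightarrow> B \<in> carrier_mat n nc \<Longrightarrow> i < nr \<Longrightarrow> j < nc \<Longrightarrow>
  (A * B) $$ (i,j) = (\<Sum>k<n. A $$ (i,k) * B $$ (k,j))"
  by (simp add: scalar_prod_def atLeast0LessThan)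

lemma mtrace_sum: "A \<in> carrier_mat n n \<Longrightarrow> mtrace A = (\<Sum>i<n. A $$ (i,i))"
  unfolding mtrace_def by simp

lemma adj_adj[simp]: fixes A :: "complex mat" shows "mat_adjoint (mat_adjoint A) = A"
  by (rule eq_matI) auto

lemma adj_mult: fixes A B :: "complex mat" assumes "A \<in> carrier_mat n m" "B \<in> carrier_mat m k"
  shows "mat_adjoint (A * B) = mat_adjoint B * mat_adjoint A"
proof (rule eq_matI)
  fix i j assume ij: "i < dim_row (mat_adjoint B * mat_adjoint A)" "j < dim_col (mat_adjoint B * mat_adjoint A)"
  hence i: "i < k" and j: "j < n" using assms by auto
  have "mat_adjoint (A * B) $$ (i, j) = cnj ((A*B) $$ (j,i))" using assms i j by simp
  also have "\<dots> = (\<Sum>l<m. cnj (A $$ (j,l)) * cnj (B $$ (l,i)))"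
    by (simp add: mult_idx[OF assms j i] cnj_sum)
  also have "\<dots> = (mat_adjoint B * mat_adjoint A) $$ (i,j)"
    by (subst mult_idx[of _ k m _ n], insert assms i j, auto intro!: sum.cong simp del: complex_cnj_mult)
  finally show "mat_adjoint (A * B) $$ (i, j) = (mat_adjoint B * mat_adjoint A) $$ (i, j)" .
next
  show "dim_row (mat_adjoint (A * B)) = dim_row (mat_adjoint B * mat_adjoint A)" by simp
next
  show "dim_col (mat_adjoint (A * B)) = dim_col (mat_adjoint B * mat_adjoint A)" by simp
qed

definition diagm :: "nat \<Rightarrow> (nat \<Rightarrow> real) \<Rightarrow> complex mat" where
  "diagm n d = mat n n (\<lambda>(i,j). if i = j then complex_of_real (d i) else 0)"

lemma diagm_carrier[simp]: "diagm n d \<in> carrier_mat n n"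
  by (simp add: diagm_def)

lemma mult_diagm_idx: assumes "X \<in> carrier_mat m n" "i < m" "j < n"
  shows "(X * diagm n d) $$ (i,j) = X $$ (i,j) * of_real (d j)"
proof -
  have "(X * diagm n d) $$ (i,j) = (\<Sum>k<n. X $$ (i, k) * (if k = j then complex_of_real (d k) else 0))"
    by (subst mult_idx[of _ m n _ n], insert assms, auto simp: diagm_def)
  also have "\<dots> = (\<Sum>k<n. (if k = j then X $$ (i,k) * of_real (d j) else 0))"
    by (rule sum.cong) auto
  also have "\<dots> = X $$ (i,j) * of_real (d j)" using assms by (simp add: sum.delta)
  finally show ?thesis .
qed

definition unitary :: "nat \<Rightarrow> complex mat \<Rightarrow> bool" where
  "unitary n U \<longleftrightarrow> U \<in> carrier_mat n n \<and> mat_adjoint U * U = 1\<^sub>m n \<and> U * mat_adjoint U = 1\<^sub>m n"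

lemma unitaryI: assumes "U \<in> carrier_mat n n" "mat_adjoint U * U = 1\<^sub>m n" shows "unitary n U"
  using mat_mult_left_right_inverse[of "mat_adjoint U" n U] assms unfolding unitary_def by auto

lemma unitary_mult: assumes "unitary n U" "unitary n V" shows "unitary n (U * V)"
proof -
  have c: "U \<in> carrier_mat n n" "V \<in> carrier_mat n n" "mat_adjoint U \<in> carrier_mat n n" "mat_adjoint V \<in> carrier_mat n n"
    using assms unfolding unitary_def by auto
  have "mat_adjoint (U * V) * (U * V) = mat_adjoint V * (mat_adjoint U * U) * V"
  proof -
    have "mat_adjoint (U * V) = mat_adjoint V * mat_adjoint U" using c by (simp add: adj_mult[of _ n n _ n])
    moreover have "mat_adjoint V * mat_adjoint U * (U * V) = mat_adjoint V * (mat_adjoint U * (U * V))"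
      using assoc_mult_mat[OF c(4) c(3) mult_carrier_mat[OF c(1) c(2)]] .
    moreover have "mat_adjoint U * (U * V) = (mat_adjoint U * U) * V"
      using assoc_mult_mat[OF c(3) c(1) c(2)] by simp
    moreover have "mat_adjoint V * ((mat_adjoint U * U) * V) = mat_adjoint V * (mat_adjoint U * U) * V"
      using assoc_mult_mat[OF c(4) mult_carrier_mat[OF c(3) c(1)] c(2)] by simp
    ultimately show ?thesis by metis
  qed
  also have "\<dots> = mat_adjoint V * V" using assms c unfolding unitary_def by simp
  also have "\<dots> = 1\<^sub>m n" using assms unfolding unitary_def by simp
  finally have "mat_adjoint (U * V) * (U * V) = 1\<^sub>m n" .
  then show ?thesis by (rule unitaryI[OF mult_carrier_mat[OF c(1) c(2)]])
qed


lemma unit_eigen: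
  fixes A :: "complex mat"
  assumes A: "A \<in> carrier_mat n n" and n: "0 < n"
  shows "\<exists>W e. unitary n W \<and> (\<forall>i<n. (A * W) $$ (i,0) = e * W $$ (i,0))"
proof -
  from spectrum_non_empty[OF A n] obtain e where "eigenvalue A e" unfolding spectrum_def by auto
  then obtain v where v: "v \<in> carrier_vec n" and v0: "v \<noteq> 0\<^sub>v n" and Av: "A *\<^sub>v v = e \<cdot>\<^sub>v v"
    unfolding eigenvalue_def eigenvector_def using A by auto
  interpret cof_vec_space n "TYPE(complex)" .
  define b where "b = basis_completion v"
  note bc = basis_completion[OF v v0, folded b_def]
  from bc(6,7) n obtain vs where bv: "b = v # vs" by (cases b) auto
  define ws where "ws = gram_schmidt n b"
  from gram_schmidt_result[OF bc(2) bc(4) bc(5) ws_def]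
  have ws: "corthogonal ws" "set ws \<subseteq> carrier_vec n" "length ws = n" using bc(6) by auto
  have "hd ws = v" unfolding ws_def bv using gram_schmidt_hd[OF v] by simp
  hence ws0: "ws ! 0 = v" using ws(3) n by (cases ws) auto
  have wsc: "k < n \<Longrightarrow> ws ! k \<in> carrier_vec n" for k using ws by auto
  define nr where "nr k = sqrt (\<Sum>i<n. (cmod (ws!k $ i))^2)" for k
  have sq: "ws!k \<bullet>c ws!j = (\<Sum>i<n. ws!k $ i * cnj (ws!j $ i))" if "k < n" "j < n" for k j
    using wsc[OF that(1)] wsc[OF that(2)] by (simp add: scalar_prod_def atLeast0LessThan)
  have nrsq: "complex_of_real ((nr k)^2) = (\<Sum>i<n. ws!k $ i * cnj (ws!k $ i))" for k
  proof -
    have "(nr k)^2 = (\<Sum>i<n. (cmod (ws!k $ i))^2)" unfolding nr_def by (simp add: sum_nonneg)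
    thus ?thesis by (simp only: of_real_sum complex_norm_square)
  qed
  have nz: "nr k > 0" if k: "k < n" for k
  proof -
    have "ws!k \<bullet>c ws!k \<noteq> 0" using corthogonalD[OF ws(1), of k k] ws(3) k by auto
    hence "(nr k)^2 \<noteq> 0" using sq[OF k k] nrsq[of k] by auto
    moreover have "nr k \<ge> 0" unfolding nr_def by (simp add: sum_nonneg)
    ultimately show ?thesis by auto
  qed
  define W where "W = mat n n (\<lambda>(i,k). ws!k $ i / complex_of_real (nr k))"
  have Wc: "W \<in> carrier_mat n n" unfolding W_def by simp
  have "mat_adjoint W * W = 1\<^sub>m n"
  proof (rule eq_matI)
    fix i j assume "i < dim_row (1\<^sub>m n)" "j < dim_col (1\<^sub>m n)"
    hence i: "i < n" and j: "j < n" by auto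
    have "(mat_adjoint W * W) $$ (i,j) = (\<Sum>k<n. cnj (W $$ (k,i)) * W $$ (k,j))"
      by (subst mult_idx[of _ n n _ n], insert Wc i j, auto)
    also have "\<dots> = (\<Sum>k<n. ws!j $ k * cnj (ws!i $ k)) / (complex_of_real (nr i) * complex_of_real (nr j))"
      unfolding W_def using i j by (simp add: sum_divide_distrib mult.commute)
    also have "\<dots> = 1\<^sub>m n $$ (i,j)"
    proof (cases "i = j")
      case True
      thus ?thesis using nrsq[of i, symmetric] nz[OF i] i by (simp add: power2_eq_square)
    next
      case False
      have "ws!j \<bullet>c ws!i = 0" using corthogonalD[OF ws(1), of j i] ws(3) i j False by auto
      thus ?thesis using sq[OF j i] False i j by simp
    qed
    finally show "(mat_adjoint W * W) $$ (i,j) = 1\<^sub>m n $$ (i,j)" .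
  qed (insert Wc, auto)
  hence U: "unitary n W" by (rule unitaryI[OF Wc])
  have "(A * W) $$ (i,0) = e * W $$ (i,0)" if i: "i < n" for i
  proof -
    have "(A * W) $$ (i,0) = (\<Sum>j<n. A $$ (i,j) * v $ j) / complex_of_real (nr 0)"
      by (subst mult_idx[of _ n n _ n], insert A Wc i n, auto simp: W_def ws0 sum_divide_distrib)
    also have "(\<Sum>j<n. A $$ (i,j) * v $ j) = (A *\<^sub>v v) $ i"
      using A v i by (simp add: scalar_prod_def atLeast0LessThan)
    also have "\<dots> = e * v $ i" using Av v i by simp
    finally show ?thesis unfolding W_def using i n by (simp add: ws0)
  qed
  with U show ?thesis by blast
qed


lemma unitary_carrier[simp]: "unitary n U \<Longrightarrow> U \<in> carrier_mat n n" unfolding unitary_def by auto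

lemma unitary_left: assumes "unitary n U" "X \<in> carrier_mat n k" shows "mat_adjoint U * (U * X) = X"
proof -
  have "mat_adjoint U * (U * X) = (mat_adjoint U * U) * X"
    using assms by (subst assoc_mult_mat[of _ n n _ n _ k]) auto
  thus ?thesis using assms unfolding unitary_def by auto
qed

lemma unitary_right: assumes "unitary n U" "X \<in> carrier_mat n k" shows "U * (mat_adjoint U * X) = X"
proof -
  have "U * (mat_adjoint U * X) = (U * mat_adjoint U) * X"
    using assms by (subst assoc_mult_mat[of _ n n _ n _ k]) auto
  thus ?thesis using assms unfolding unitary_def by auto
qed

lemma spectral:
  fixes A :: "complex mat"
  assumes "A \<in> carrier_mat n n" "mat_adjoint A = A"
  shows "\<exists>U d. unitary n U \<and> A = U * diagm n d * mat_adjoint U"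
  using assms
proof (induct n arbitrary: A)
  case 0
  have "unitary 0 (1\<^sub>m 0)" by (rule unitaryI) (auto intro!: eq_matI)
  moreover have "A = 1\<^sub>m 0 * diagm 0 (\<lambda>_. 0) * mat_adjoint (1\<^sub>m 0)"
    using 0 by (intro eq_matI) auto
  ultimately show ?case by blast
next
  case (Suc m A)
  let ?n = "Suc m"
  have A: "A \<in> carrier_mat ?n ?n" and AH: "mat_adjoint A = A" using Suc by auto
  from unit_eigen[OF A] obtain W e where W: "unitary ?n W" and eig: "\<And>i. i < ?n \<Longrightarrow> (A * W) $$ (i,0) = e * W $$ (i,0)"
    by auto
  have Wc: "W \<in> carrier_mat ?n ?n" "mat_adjoint W \<in> carrier_mat ?n ?n" using W by auto
  define A' where "A' = mat_adjoint W * (A * W)"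
  have A'c: "A' \<in> carrier_mat ?n ?n" unfolding A'_def using Wc A by auto
  have A'H: "mat_adjoint A' = A'"
  proof -
    have "mat_adjoint A' = mat_adjoint (A * W) * W"
      unfolding A'_def by (subst adj_mult[of _ ?n ?n _ ?n], insert Wc A, auto)
    also have "\<dots> = (mat_adjoint W * A) * W"
      by (subst adj_mult[of _ ?n ?n _ ?n], insert Wc A AH, auto)
    also have "\<dots> = A'" unfolding A'_def using Wc A by (subst assoc_mult_mat[of _ ?n ?n _ ?n _ ?n]) auto
    finally show ?thesis .
  qed
  have AWc: "A * W \<in> carrier_mat ?n ?n" using A Wc by auto
  have col0: "A' $$ (i,0) = (if i = 0 then e else 0)" if i: "i < ?n" for i
  proof -
    have "A' $$ (i,0) = (\<Sum>k<?n. cnj (W $$ (k,i)) * (A * W) $$ (k,0))"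
      unfolding A'_def by (subst mult_idx[of _ ?n ?n _ ?n], insert Wc AWc i, auto)
    also have "\<dots> = e * (\<Sum>k<?n. cnj (W $$ (k,i)) * W $$ (k,0))"
      unfolding sum_distrib_left by (rule sum.cong) (auto simp: eig)
    also have "(\<Sum>k<?n. cnj (W $$ (k,i)) * W $$ (k,0)) = (mat_adjoint W * W) $$ (i,0)"
      by (subst mult_idx[of _ ?n ?n _ ?n], insert Wc i, auto)
    also have "\<dots> = (if i = 0 then 1 else 0)" using W i unfolding unitary_def by auto
    finally show ?thesis by simp
  qed
  have herm: "A' $$ (i,j) = cnj (A' $$ (j,i))" if "i < ?n" "j < ?n" for i j
  proof -
    have "A' $$ (i,j) = mat_adjoint A' $$ (i,j)" using A'H by simp
    thus ?thesis using that A'c by simp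
  qed
  have row0: "A' $$ (0,j) = (if j = 0 then e else 0)" if j: "j < ?n" for j
    using herm[of 0 j] col0[OF j] j col0[of 0] herm[of 0 0] by (cases "j = 0") auto
  have ereal: "cnj e = e" using herm[of 0 0] col0[of 0] by auto
  define r where "r = Re e"
  have er: "e = complex_of_real r" unfolding r_def using ereal by (metis Reals_cnj_iff complex_is_Real_iff of_real_Re)
  define A3 where "A3 = mat m m (\<lambda>(i,j). A' $$ (Suc i, Suc j))"
  have A3c: "A3 \<in> carrier_mat m m" unfolding A3_def by simp
  have A3H: "mat_adjoint A3 = A3"
  proof (rule eq_matI)
    fix i j assume "i < dim_row A3" "j < dim_col A3"
    hence i: "i < m" and j: "j < m" using A3c by auto
    have "mat_adjoint A3 $$ (i,j) = cnj (A' $$ (Suc j, Suc i))" using i j A3c by (simp add: A3_def)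
    also have "\<dots> = A' $$ (Suc i, Suc j)" using herm[of "Suc i" "Suc j"] i j by simp
    finally show "mat_adjoint A3 $$ (i,j) = A3 $$ (i,j)" using i j by (simp add: A3_def)
  qed (insert A3c, auto)
  from Suc(1)[OF A3c A3H] obtain U3 d3 where U3: "unitary m U3" and A3eq: "A3 = U3 * diagm m d3 * mat_adjoint U3"
    by auto
  have U3c: "U3 \<in> carrier_mat m m" using U3 by auto
  define E where "E = mat ?n ?n (\<lambda>(i,j). if i = 0 then (if j = 0 then 1 else 0) else if j = 0 then 0 else U3 $$ (i-1, j-1))"
  define d where "d = (\<lambda>k. if k = 0 then r else d3 (k-1))"
  have Ec: "E \<in> carrier_mat ?n ?n" unfolding E_def by simp
  have E: "unitary ?n E"
  proof (rule unitaryI[OF Ec], rule eq_matI)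
    fix i j assume "i < dim_row (1\<^sub>m ?n)" "j < dim_col (1\<^sub>m ?n)"
    hence i: "i < ?n" and j: "j < ?n" by auto
    have "(mat_adjoint E * E) $$ (i,j) = (\<Sum>k<?n. cnj (E $$ (k,i)) * E $$ (k,j))"
      by (subst mult_idx[of _ ?n ?n _ ?n], insert Ec i j, auto)
    also have "\<dots> = cnj (E $$ (0,i)) * E $$ (0,j) + (\<Sum>k<m. cnj (E $$ (Suc k,i)) * E $$ (Suc k,j))"
      by (rule sum.lessThan_Suc_shift)
    also have "\<dots> = 1\<^sub>m ?n $$ (i,j)"
    proof (cases i)
      case 0
      thus ?thesis using i j by (auto simp: E_def)
    next
      case (Suc i')
      show ?thesis
      proof (cases j)
        case 0
        thus ?thesis using i j Suc by (auto simp: E_def)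
      next
        case (Suc j')
        have "(\<Sum>k<m. cnj (E $$ (Suc k,i)) * E $$ (Suc k,j)) = (\<Sum>k<m. cnj (U3 $$ (k,i')) * U3 $$ (k,j'))"
          using i j \<open>i = Suc i'\<close> Suc by (auto simp: E_def intro!: sum.cong)
        also have "\<dots> = (mat_adjoint U3 * U3) $$ (i',j')"
          by (subst mult_idx[of _ m m _ m], insert U3c i j \<open>i = Suc i'\<close> Suc, auto)
        also have "\<dots> = 1\<^sub>m m $$ (i',j')" using U3 unfolding unitary_def by simp
        finally show ?thesis using i j \<open>i = Suc i'\<close> Suc by (auto simp: E_def)
      qed
    qed
    finally show "(mat_adjoint E * E) $$ (i,j) = 1\<^sub>m ?n $$ (i,j)" .
  qed (insert Ec, auto)
  have A'eq: "A' = E * diagm ?n d * mat_adjoint E"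
  proof (rule eq_matI)
    fix i j assume "i < dim_row (E * diagm ?n d * mat_adjoint E)" "j < dim_col (E * diagm ?n d * mat_adjoint E)"
    hence i: "i < ?n" and j: "j < ?n" using Ec by auto
    have "(E * diagm ?n d * mat_adjoint E) $$ (i,j) = (\<Sum>k<?n. E $$ (i,k) * of_real (d k) * cnj (E $$ (j,k)))"
      by (subst mult_idx[of _ ?n ?n _ ?n], insert Ec i j, auto simp: mult_diagm_idx[OF Ec])
    also have "\<dots> = E $$ (i,0) * of_real (d 0) * cnj (E $$ (j,0)) + (\<Sum>k<m. E $$ (i,Suc k) * of_real (d (Suc k)) * cnj (E $$ (j,Suc k)))"
      by (rule sum.lessThan_Suc_shift)
    also have "\<dots> = A' $$ (i,j)"
    proof (cases i)
      case 0
      thus ?thesis using i j row0 er by (auto simp: E_def d_def)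
    next
      case (Suc i')
      show ?thesis
      proof (cases j)
        case 0
        thus ?thesis using i j Suc col0 by (auto simp: E_def d_def)
      next
        case (Suc j')
        have "(\<Sum>k<m. E $$ (i,Suc k) * of_real (d (Suc k)) * cnj (E $$ (j,Suc k))) = (\<Sum>k<m. U3 $$ (i',k) * of_real (d3 k) * cnj (U3 $$ (j',k)))"
          using i j \<open>i = Suc i'\<close> Suc by (auto simp: E_def d_def intro!: sum.cong)
        also have "\<dots> = (U3 * diagm m d3 * mat_adjoint U3) $$ (i',j')"
          by (subst mult_idx[of _ m m _ m], insert U3c i j \<open>i = Suc i'\<close> Suc, auto simp: mult_diagm_idx[OF U3c])
        also have "\<dots> = A' $$ (i,j)" unfolding A3eq[symmetric] using i j \<open>i = Suc i'\<close> Suc by (simp add: A3_def)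
        finally show ?thesis using i j \<open>i = Suc i'\<close> Suc by (auto simp: E_def)
      qed
    qed
    finally show "A' $$ (i,j) = (E * diagm ?n d * mat_adjoint E) $$ (i,j)" by simp
  qed (insert Ec A'c, auto)
  have as: "\<And>X Y Z. X \<in> carrier_mat ?n ?n \<Longrightarrow> Y \<in> carrier_mat ?n ?n \<Longrightarrow> Z \<in> carrier_mat ?n ?n \<Longrightarrow> X * Y * Z = X * (Y * Z)"
    by (rule assoc_mult_mat)
  have cl: "\<And>X Y. X \<in> carrier_mat ?n ?n \<Longrightarrow> Y \<in> carrier_mat ?n ?n \<Longrightarrow> X * Y \<in> carrier_mat ?n ?n"
    by (rule mult_carrier_mat)
  have "A = W * A' * mat_adjoint W"
  proof -
    have "W * A' * mat_adjoint W = W * (mat_adjoint W * (A * (W * mat_adjoint W)))"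
      unfolding A'_def using Wc A
      by (simp add: as cl)
    also have "W * mat_adjoint W = 1\<^sub>m ?n" using W unfolding unitary_def by auto
    finally show ?thesis using unitary_right[OF W A] A by simp
  qed
  also have "\<dots> = (W * E) * diagm ?n d * mat_adjoint (W * E)"
    unfolding A'eq using Wc Ec
    by (simp add: adj_mult[of _ ?n ?n _ ?n] as cl)
  finally show ?case using unitary_mult[OF W E] by blast
qed


lemma diagm_dims[simp]: "dim_row (diagm n d) = n" "dim_col (diagm n d) = n"
  by (simp_all add: diagm_def)

lemma udu_idx: assumes "U \<in> carrier_mat n n" "i < n" "j < n"
  shows "(U * diagm n d * mat_adjoint U) $$ (i,j) = (\<Sum>k<n. U $$ (i,k) * of_real (d k) * cnj (U $$ (j,k)))"
  by (subst mult_idx[of _ n n _ n], insert assms, auto simp: mult_diagm_idx simp del: index_mult_mat)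

lemma diagm_mult: "diagm n f * diagm n g = diagm n (\<lambda>k. f k * g k)"
proof (rule eq_matI)
  fix i j assume "i < dim_row (diagm n (\<lambda>k. f k * g k))" "j < dim_col (diagm n (\<lambda>k. f k * g k))"
  hence i: "i < n" and j: "j < n" by (auto simp: diagm_def)
  show "(diagm n f * diagm n g) $$ (i,j) = diagm n (\<lambda>k. f k * g k) $$ (i,j)"
    using mult_diagm_idx[of "diagm n f" n n i j g] i j by (auto simp: diagm_def)
qed (auto simp: diagm_def)

lemma adj_diagm[simp]: "mat_adjoint (diagm n d) = diagm n d"
  by (rule eq_matI) (auto simp: diagm_def)

lemma qf_expand: assumes "S \<in> carrier_mat n n" "v \<in> carrier_vec n"
  shows "conjugate v \<bullet> (S *\<^sub>v v) = (\<Sum>i<n. cnj (v $ i) * (\<Sum>j<n. S $$ (i,j) * v $ j))"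
  using assms by (simp add: scalar_prod_def atLeast0LessThan)

lemma sq_assoc: "X \<in> carrier_mat n n \<Longrightarrow> Y \<in> carrier_mat n n \<Longrightarrow> Z \<in> carrier_mat n n \<Longrightarrow> X * Y * Z = X * (Y * Z)"
  by (rule assoc_mult_mat)

lemma sq_cl: "X \<in> carrier_mat n n \<Longrightarrow> Y \<in> carrier_mat n n \<Longrightarrow> X * Y \<in> carrier_mat n n"
  by (rule mult_carrier_mat)

lemma psd_diag_nonneg:
  assumes P: "is_psd n S" and U: "unitary n U" and S: "S = U * diagm n d * mat_adjoint U" and k: "k < n"
  shows "d k \<ge> 0"
proof -
  have Uc: "U \<in> carrier_mat n n" "mat_adjoint U \<in> carrier_mat n n" using U by auto
  have Sc: "S \<in> carrier_mat n n" using P unfolding is_psd_def by auto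
  define v where "v = col U k"
  have v: "v \<in> carrier_vec n" unfolding v_def using Uc by auto
  have "0 \<le> Re (conjugate v \<bullet> (S *\<^sub>v v))" using P v unfolding is_psd_def by auto
  also have "conjugate v \<bullet> (S *\<^sub>v v) = (\<Sum>i<n. cnj (U $$ (i,k)) * (S * U) $$ (i,k))"
    unfolding qf_expand[OF Sc v] using Uc Sc k
    by (auto simp: v_def scalar_prod_def atLeast0LessThan intro!: sum.cong)
  also have "\<dots> = (mat_adjoint U * (S * U)) $$ (k,k)"
  proof -
    have "(mat_adjoint U * (S * U)) $$ (k,k) = (\<Sum>i<n. mat_adjoint U $$ (k,i) * (S*U)$$(i,k))"
      by (rule mult_idx) (use Uc Sc k in auto)
    also have "\<dots> = (\<Sum>i<n. cnj (U $$ (i,k)) * (S*U)$$(i,k))" by (rule sum.cong) (use Uc k in auto)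
    finally show ?thesis by simp
  qed
  also have "mat_adjoint U * (S * U) = diagm n d"
  proof -
    have "S * U = U * diagm n d * (mat_adjoint U * U)" unfolding S using Uc
      by (simp add: sq_assoc[of _ n] sq_cl[of _ n])
    also have "mat_adjoint U * U = 1\<^sub>m n" using U unfolding unitary_def by auto
    finally have "S * U = U * diagm n d" using right_mult_one_mat[OF mult_carrier_mat[OF Uc(1) diagm_carrier[of n d]]] by simp
    thus ?thesis using unitary_left[OF U, of "diagm n d" n] by simp
  qed
  finally show ?thesis using k by (simp add: diagm_def)
qed


lemma sum3_swap: "(\<Sum>i\<in>A. \<Sum>j\<in>B. \<Sum>k\<in>C. f i j k) = (\<Sum>k\<in>C. \<Sum>i\<in>A. \<Sum>j\<in>B. f i j k)"
proof -
  have "(\<Sum>i\<in>A. \<Sum>j\<in>B. \<Sum>k\<in>C. f i j k) = (\<Sum>i\<in>A. \<Sum>k\<in>C. \<Sum>j\<in>B. f i j k)"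
    by (rule sum.cong[OF refl], rule sum.swap)
  also have "\<dots> = (\<Sum>k\<in>C. \<Sum>i\<in>A. \<Sum>j\<in>B. f i j k)" by (rule sum.swap)
  finally show ?thesis .
qed

lemma adj_udu: assumes "U \<in> carrier_mat n n"
  shows "mat_adjoint (U * diagm n d * mat_adjoint U) = U * diagm n d * mat_adjoint U"
proof -
  have "mat_adjoint (U * diagm n d * mat_adjoint U) = U * mat_adjoint (U * diagm n d)"
    by (subst adj_mult[of _ n n _ n], insert assms, auto)
  also have "mat_adjoint (U * diagm n d) = diagm n d * mat_adjoint U"
    by (subst adj_mult[of _ n n _ n], insert assms, auto)
  finally show ?thesis using assms by (simp add: sq_assoc[of _ n])
qed

lemma psd_of_diag: assumes U: "unitary n U" and d: "\<forall>k<n. d k \<ge> 0"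
  shows "is_psd n (U * diagm n d * mat_adjoint U)"
proof -
  let ?S = "U * diagm n d * mat_adjoint U"
  have Uc: "U \<in> carrier_mat n n" using U by auto
  have Sc: "?S \<in> carrier_mat n n" using Uc by auto
  have "0 \<le> Re (conjugate v \<bullet> (?S *\<^sub>v v))" if v: "v \<in> carrier_vec n" for v
  proof -
    define w where "w k = (\<Sum>j<n. cnj (U $$ (j,k)) * v $ j)" for k
    have "conjugate v \<bullet> (?S *\<^sub>v v) = (\<Sum>i<n. cnj (v $ i) * (\<Sum>j<n. (\<Sum>k<n. U $$ (i,k) * of_real (d k) * cnj (U $$ (j,k))) * v $ j))"
      unfolding qf_expand[OF Sc v] by (auto simp: udu_idx[OF Uc] intro!: sum.cong)
    also have "\<dots> = (\<Sum>i<n. \<Sum>j<n. \<Sum>k<n. cnj (v $ i) * U $$ (i,k) * of_real (d k) * cnj (U $$ (j,k)) * v $ j)"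
      by (simp add: sum_distrib_left sum_distrib_right mult.assoc)
    also have "\<dots> = (\<Sum>k<n. \<Sum>i<n. \<Sum>j<n. cnj (v $ i) * U $$ (i,k) * of_real (d k) * cnj (U $$ (j,k)) * v $ j)"
      by (rule sum3_swap)
    also have "\<dots> = (\<Sum>k<n. \<Sum>i<n. \<Sum>j<n. of_real (d k) * ((cnj (v$i) * U$$(i,k)) * (cnj (U$$(j,k)) * v$j)))"
      by (intro sum.cong refl) (simp add: mult_ac)
    also have "\<dots> = (\<Sum>k<n. of_real(d k) * ((\<Sum>i<n. cnj (v$i) * U$$(i,k)) * (\<Sum>j<n. cnj (U$$(j,k)) * v$j)))"
      unfolding sum_product by (simp only: sum_distrib_left)
    also have "\<dots> = (\<Sum>k<n. of_real (d k) * (cnj (w k) * w k))"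
    proof -
      have cw: "(\<Sum>i<n. cnj (v$i) * U$$(i,k)) = cnj (w k)" for k unfolding w_def by (simp add: cnj_sum mult.commute)
      show ?thesis unfolding cw by (simp only: w_def)
    qed
    also have "\<dots> = of_real (\<Sum>k<n. d k * (cmod (w k))^2)"
      unfolding of_real_sum of_real_mult complex_norm_square by (simp add: mult.commute)
    finally have "Re (conjugate v \<bullet> (?S *\<^sub>v v)) = (\<Sum>k<n. d k * (cmod (w k))^2)" by simp
    also have "\<dots> \<ge> 0" using d by (auto intro!: sum_nonneg)
    finally show ?thesis .
  qed
  thus ?thesis unfolding is_psd_def using Sc adj_udu[OF Uc] by auto
qed

lemma diagm_cong: "(\<And>k. k < n \<Longrightarrow> f k = g k) \<Longrightarrow> diagm n f = diagm n g"
  by (rule eq_matI) (auto simp: diagm_def)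

lemma udu_sq: assumes U: "unitary n U"
  shows "(U * diagm n d * mat_adjoint U) * (U * diagm n d * mat_adjoint U) = U * diagm n (\<lambda>k. d k * d k) * mat_adjoint U"
proof -
  have Uc: "U \<in> carrier_mat n n" "mat_adjoint U \<in> carrier_mat n n" using U by auto
  have "(U * diagm n d * mat_adjoint U) * (U * diagm n d * mat_adjoint U) = U * (diagm n d * (mat_adjoint U * (U * (diagm n d * mat_adjoint U))))"
    using Uc by (simp add: sq_assoc[of _ n] sq_cl[of _ n])
  also have "mat_adjoint U * (U * (diagm n d * mat_adjoint U)) = diagm n d * mat_adjoint U"
    by (rule unitary_left[OF U mult_carrier_mat[OF diagm_carrier Uc(2)]])
  also have "U * (diagm n d * (diagm n d * mat_adjoint U)) = U * (diagm n d * diagm n d) * mat_adjoint U"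
    using Uc by (simp add: sq_assoc[of _ n] sq_cl[of _ n])
  finally show ?thesis by (simp add: diagm_mult)
qed

lemma psd_sqrt_exists: assumes P: "is_psd n P" shows "\<exists>S. is_psd n S \<and> S * S = P"
proof -
  have Pc: "P \<in> carrier_mat n n" and PH: "mat_adjoint P = P" using P unfolding is_psd_def by auto
  from spectral[OF Pc PH] obtain U d where U: "unitary n U" and Pe: "P = U * diagm n d * mat_adjoint U" by auto
  have d: "\<forall>k<n. d k \<ge> 0" using psd_diag_nonneg[OF P U Pe] by auto
  define S where "S = U * diagm n (\<lambda>k. sqrt (d k)) * mat_adjoint U"
  have "is_psd n S" unfolding S_def by (rule psd_of_diag[OF U]) (use d in auto)
  moreover have "S * S = P" unfolding S_def udu_sq[OF U] Pe
    using d by (auto intro!: arg_cong[where f = "\<lambda>D. U * D * mat_adjoint U"] diagm_cong)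
  ultimately show ?thesis by blast
qed

lemma diagm_mult_idx: assumes "X \<in> carrier_mat n m" "i < n" "j < m"
  shows "(diagm n d * X) $$ (i,j) = of_real (d i) * X $$ (i,j)"
proof -
  have "(diagm n d * X) $$ (i,j) = (\<Sum>k<n. (if i = k then complex_of_real (d i) else 0) * X $$ (k, j))"
    by (subst mult_idx[of _ n n _ m], insert assms, auto simp: diagm_def)
  also have "\<dots> = (\<Sum>k<n. (if k = i then of_real (d i) * X $$ (i,j) else 0))"
    by (rule sum.cong) auto
  also have "\<dots> = of_real (d i) * X $$ (i,j)" using assms by (simp add: sum.delta)
  finally show ?thesis .
qed

lemma psd_sqrt_unique: assumes S: "is_psd n S" and T: "is_psd n T" and ST: "S * S = T * T"
  shows "S = T"
proof -
  have Sc: "S \<in> carrier_mat n n" and SH: "mat_adjoint S = S" using S unfolding is_psd_def by auto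
  have Tc: "T \<in> carrier_mat n n" and TH: "mat_adjoint T = T" using T unfolding is_psd_def by auto
  from spectral[OF Sc SH] obtain U d where U: "unitary n U" and Se: "S = U * diagm n d * mat_adjoint U" by auto
  from spectral[OF Tc TH] obtain V e where V: "unitary n V" and Te: "T = V * diagm n e * mat_adjoint V" by auto
  have d: "\<forall>k<n. d k \<ge> 0" using psd_diag_nonneg[OF S U Se] by auto
  have e: "\<forall>k<n. e k \<ge> 0" using psd_diag_nonneg[OF T V Te] by auto
  have Uc: "U \<in> carrier_mat n n" "mat_adjoint U \<in> carrier_mat n n" using U by auto
  have Vc: "V \<in> carrier_mat n n" "mat_adjoint V \<in> carrier_mat n n" using V by auto
  define X where "X = mat_adjoint U * V"
  have Xc: "X \<in> carrier_mat n n" unfolding X_def using Uc Vc by auto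
  have UU: "mat_adjoint U * U = 1\<^sub>m n" "U * mat_adjoint U = 1\<^sub>m n" using U unfolding unitary_def by auto
  have VV: "mat_adjoint V * V = 1\<^sub>m n" "V * mat_adjoint V = 1\<^sub>m n" using V unfolding unitary_def by auto
  have eq2: "U * diagm n (\<lambda>k. d k * d k) * mat_adjoint U = V * diagm n (\<lambda>k. e k * e k) * mat_adjoint V"
    using ST unfolding Se Te udu_sq[OF U] udu_sq[OF V] .
  have "mat_adjoint U * (U * diagm n (\<lambda>k. d k * d k) * mat_adjoint U) * V = mat_adjoint U * (U * (diagm n (\<lambda>k. d k * d k) * X))"
    unfolding X_def using Uc Vc by (simp add: sq_assoc[of _ n] sq_cl[of _ n])
  also have "\<dots> = diagm n (\<lambda>k. d k * d k) * X" by (rule unitary_left[OF U mult_carrier_mat[OF diagm_carrier Xc]])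
  finally have "diagm n (\<lambda>k. d k * d k) * X = mat_adjoint U * (U * diagm n (\<lambda>k. d k * d k) * mat_adjoint U) * V" by simp
  also have "\<dots> = mat_adjoint U * (V * diagm n (\<lambda>k. e k * e k) * mat_adjoint V) * V" unfolding eq2 ..
  also have "\<dots> = X * diagm n (\<lambda>k. e k * e k)"
    unfolding X_def using Uc Vc VV by (simp add: sq_assoc[of _ n] sq_cl[of _ n] right_mult_one_mat[OF diagm_carrier])
  finally have DX: "diagm n (\<lambda>k. d k * d k) * X = X * diagm n (\<lambda>k. e k * e k)" .
  have DX1: "diagm n d * X = X * diagm n e"
  proof (rule eq_matI)
    fix i j assume "i < dim_row (X * diagm n e)" "j < dim_col (X * diagm n e)"
    hence i: "i < n" and j: "j < n" using Xc by auto
    have "(diagm n (\<lambda>k. d k * d k) * X) $$ (i,j) = (X * diagm n (\<lambda>k. e k * e k)) $$ (i,j)" using DX by simp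
    hence h: "of_real (d i * d i) * X $$ (i,j) = X $$ (i,j) * of_real (e j * e j)"
      using diagm_mult_idx[OF Xc i j] mult_diagm_idx[OF Xc i j] by simp
    have "of_real (d i) * X $$ (i,j) = X $$ (i,j) * of_real (e j)"
    proof (cases "X $$ (i,j) = 0")
      case False
      have "complex_of_real (d i * d i) * X $$ (i,j) = complex_of_real (e j * e j) * X $$ (i,j)"
        using h by (simp add: mult.commute)
      hence "complex_of_real (d i * d i) = complex_of_real (e j * e j)" using False by simp
      hence "d i * d i = e j * e j" by (simp only: of_real_eq_iff)
      hence "d i = e j" using d e i j by (metis abs_of_nonneg real_sqrt_abs2 real_sqrt_mult_self power2_eq_square)
      thus ?thesis by (simp add: mult.commute)
    qed simp
    thus "(diagm n d * X) $$ (i,j) = (X * diagm n e) $$ (i,j)"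
      using diagm_mult_idx[OF Xc i j] mult_diagm_idx[OF Xc i j] by simp
  qed (insert Xc, auto)
  have "S * V = U * (diagm n d * X)"
    unfolding Se X_def using Uc Vc by (simp add: sq_assoc[of _ n] sq_cl[of _ n])
  also have "\<dots> = U * (X * diagm n e)" unfolding DX1 ..
  also have "\<dots> = V * diagm n e" unfolding X_def using Uc Vc
    by (simp add: sq_assoc[of _ n] sq_cl[of _ n] unitary_right[OF U mult_carrier_mat[OF Vc(1) diagm_carrier]])
  also have "\<dots> = T * V" unfolding Te using Vc VV by (simp add: sq_assoc[of _ n] sq_cl[of _ n])
  finally have SV: "S * V = T * V" .
  have "S = S * V * mat_adjoint V" using Sc Vc VV by (simp add: sq_assoc[of _ n])
  also have "\<dots> = T * V * mat_adjoint V" unfolding SV ..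
  also have "\<dots> = T" using Tc Vc VV by (simp add: sq_assoc[of _ n])
  finally show ?thesis .
qed

lemma psd_sqrt_prop: assumes P: "is_psd n P"
  shows "is_psd n (psd_sqrt P) \<and> psd_sqrt P * psd_sqrt P = P"
proof -
  have dr: "dim_row P = n" using P unfolding is_psd_def by auto
  from psd_sqrt_exists[OF P] obtain S where S: "is_psd n S \<and> S * S = P" by auto
  show ?thesis unfolding psd_sqrt_def dr
  proof (rule theI[of _ S])
    show "is_psd n S \<and> S * S = P" by fact
    fix T assume "is_psd n T \<and> T * T = P"
    thus "T = S" using psd_sqrt_unique[of n T S] S by auto
  qed
qed


lemma real_cs: fixes x y :: "nat \<Rightarrow> real" assumes "finite K"
  shows "(\<Sum>k\<in>K. x k * y k)^2 \<le> (\<Sum>k\<in>K. (x k)^2) * (\<Sum>k\<in>K. (y k)^2)"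
proof -
  have "0 \<le> (\<Sum>k\<in>K. \<Sum>l\<in>K. (x k * y l - x l * y k)^2)" by (intro sum_nonneg) auto
  also have "\<dots> = (\<Sum>k\<in>K. \<Sum>l\<in>K. (x k)^2 * (y l)^2) + (\<Sum>k\<in>K. \<Sum>l\<in>K. (x l)^2 * (y k)^2)
       - 2 * (\<Sum>k\<in>K. \<Sum>l\<in>K. (x k * y k) * (x l * y l))"
    by (simp add: power2_eq_square algebra_simps sum_subtractf sum.distrib sum_distrib_left)
  also have "(\<Sum>k\<in>K. \<Sum>l\<in>K. (x l)^2 * (y k)^2) = (\<Sum>k\<in>K. \<Sum>l\<in>K. (x k)^2 * (y l)^2)"
    by (rule sum.swap)
  also have "(\<Sum>k\<in>K. \<Sum>l\<in>K. (x k)^2 * (y l)^2) = (\<Sum>k\<in>K. (x k)^2) * (\<Sum>k\<in>K. (y k)^2)"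
    by (simp add: sum_product)
  also have "(\<Sum>k\<in>K. \<Sum>l\<in>K. (x k * y k) * (x l * y l)) = (\<Sum>k\<in>K. x k * y k)^2"
    by (simp add: sum_product power2_eq_square)
  finally show ?thesis by simp
qed

lemma real_cs_sqrt: fixes x y :: "nat \<Rightarrow> real" assumes "finite K"
  shows "(\<Sum>k\<in>K. x k * y k) \<le> sqrt (\<Sum>k\<in>K. (x k)^2) * sqrt (\<Sum>k\<in>K. (y k)^2)"
proof -
  have "(\<Sum>k\<in>K. x k * y k) \<le> sqrt ((\<Sum>k\<in>K. x k * y k)^2)" by simp
  also have "\<dots> \<le> sqrt ((\<Sum>k\<in>K. (x k)^2) * (\<Sum>k\<in>K. (y k)^2))"
    using real_cs[OF assms] by (rule real_sqrt_le_mono)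
  also have "\<dots> = sqrt (\<Sum>k\<in>K. (x k)^2) * sqrt (\<Sum>k\<in>K. (y k)^2)" by (rule real_sqrt_mult)
  finally show ?thesis .
qed

lemma complex_cs: fixes a b :: "nat \<Rightarrow> complex" assumes "finite K"
  shows "cmod (\<Sum>k\<in>K. a k * b k) \<le> sqrt (\<Sum>k\<in>K. (cmod (a k))^2) * sqrt (\<Sum>k\<in>K. (cmod (b k))^2)"
proof -
  have "cmod (\<Sum>k\<in>K. a k * b k) \<le> (\<Sum>k\<in>K. cmod (a k) * cmod (b k))"
    by (rule order_trans[OF norm_sum]) (simp add: norm_mult)
  also have "\<dots> \<le> sqrt (\<Sum>k\<in>K. (cmod (a k))^2) * sqrt (\<Sum>k\<in>K. (cmod (b k))^2)"
    by (rule real_cs_sqrt[OF assms])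
  finally show ?thesis .
qed

definition ip :: "nat \<Rightarrow> (nat \<Rightarrow> complex) \<Rightarrow> (nat \<Rightarrow> complex) \<Rightarrow> complex" where
  "ip m f g = (\<Sum>r<m. cnj (f r) * g r)"

lemma ip_self: "ip m f f = of_real (\<Sum>r<m. (cmod (f r))^2)"
  unfolding ip_def of_real_sum complex_norm_square by (simp add: mult.commute)

lemma ip_minus: "ip m (\<lambda>r. f r - g r) (\<lambda>r. f r - g r) = ip m f f - ip m f g - ip m g f + ip m g g"
  unfolding ip_def by (simp add: algebra_simps sum_subtractf sum.distrib)

lemma ip_cnj: "ip m g f = cnj (ip m f g)"
  unfolding ip_def by (simp add: cnj_sum mult.commute)

lemma bessel:
  fixes q :: "nat \<Rightarrow> nat \<Rightarrow> complex" and u :: "nat \<Rightarrow> complex"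
  assumes orth: "\<And>j k. j < n \<Longrightarrow> k < n \<Longrightarrow> (\<Sum>r<m. cnj (q j r) * q k r) = (if j = k \<and> P k then 1 else 0)"
  shows "(\<Sum>k<n. (cmod (\<Sum>r<m. cnj (q k r) * u r))^2) \<le> (\<Sum>r<m. (cmod (u r))^2)"
proof -
  define a where "a k = (\<Sum>r<m. cnj (q k r) * u r)" for k
  define v where "v r = (\<Sum>k<n. a k * q k r)" for r
  have a0: "a k = 0" if k: "k < n" "\<not> P k" for k
  proof -
    have "of_real (\<Sum>r<m. (cmod (q k r))^2) = ip m (q k) (q k)" by (simp add: ip_self)
    also have "\<dots> = 0" using orth[OF k(1) k(1)] k unfolding ip_def by simp
    finally have "(\<Sum>r<m. (cmod (q k r))^2) = 0" by (simp only: of_real_eq_0_iff)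
    hence "\<forall>r\<in>{..<m}. (cmod (q k r))^2 = 0" using sum_nonneg_eq_0_iff[of "{..<m}" "\<lambda>r. (cmod (q k r))^2"] by auto
    hence "\<forall>r<m. q k r = 0" by auto
    thus ?thesis unfolding a_def by simp
  qed
  have vu: "ip m v u = (\<Sum>k<n. cnj (a k) * a k)"
  proof -
    have "ip m v u = (\<Sum>r<m. \<Sum>k<n. cnj (a k) * (cnj (q k r) * u r))"
      unfolding ip_def v_def by (simp add: cnj_sum sum_distrib_right sum_distrib_left mult_ac)
    also have "\<dots> = (\<Sum>k<n. cnj (a k) * a k)"
      by (subst sum.swap) (simp add: a_def sum_distrib_left)
    finally show ?thesis .
  qed
  have vv: "ip m v v = (\<Sum>k<n. cnj (a k) * a k)"
  proof -
    have inner: "(\<Sum>r<m. cnj (q k r) * v r) = a k" if k: "k < n" for k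
    proof -
      have "(\<Sum>r<m. cnj (q k r) * v r) = (\<Sum>r<m. \<Sum>l<n. a l * (cnj (q k r) * q l r))"
        unfolding v_def by (simp add: sum_distrib_left mult_ac)
      also have "\<dots> = (\<Sum>l<n. \<Sum>r<m. a l * (cnj (q k r) * q l r))" by (rule sum.swap)
      also have "\<dots> = (\<Sum>l<n. a l * (\<Sum>r<m. cnj (q k r) * q l r))" by (simp add: sum_distrib_left)
      also have "\<dots> = (\<Sum>l<n. if l = k then (if P k then a k else 0) else 0)"
        by (rule sum.cong) (auto simp: orth k)
      also have "\<dots> = a k" using k a0[OF k] by (simp add: sum.delta)
      finally show ?thesis .
    qed
    have "ip m v v = (\<Sum>r<m. \<Sum>k<n. cnj (a k) * (cnj (q k r) * v r))"
    proof -
      have cv: "cnj (v r) = (\<Sum>k<n. cnj (a k) * cnj (q k r))" for r by (simp add: v_def cnj_sum)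
      show ?thesis unfolding ip_def cv sum_distrib_right by (simp add: mult_ac)
    qed
    also have "\<dots> = (\<Sum>k<n. \<Sum>r<m. cnj (a k) * (cnj (q k r) * v r))" by (rule sum.swap)
    also have "\<dots> = (\<Sum>k<n. cnj (a k) * (\<Sum>r<m. cnj (q k r) * v r))" by (simp add: sum_distrib_left)
    also have "\<dots> = (\<Sum>k<n. cnj (a k) * a k)" by (rule sum.cong) (auto simp: inner)
    finally show ?thesis .
  qed
  have aa: "(\<Sum>k<n. cnj (a k) * a k) = of_real (\<Sum>k<n. (cmod (a k))^2)"
    unfolding of_real_sum complex_norm_square by (simp add: mult.commute)
  have e1: "ip m (\<lambda>r. u r - v r) (\<lambda>r. u r - v r) = ip m u u - of_real (\<Sum>k<n. (cmod (a k))^2)"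
  proof -
    have h1: "ip m v u = of_real (\<Sum>k<n. (cmod (a k))^2)" unfolding vu aa by (rule refl)
    have h2: "ip m v v = of_real (\<Sum>k<n. (cmod (a k))^2)" unfolding vv aa by (rule refl)
    have h3: "ip m u v = of_real (\<Sum>k<n. (cmod (a k))^2)" unfolding ip_cnj[of m u v] h1 by (simp only: complex_cnj_complex_of_real)
    show ?thesis unfolding ip_minus h1 h2 h3 by (simp only: diff_add_cancel)
  qed
  have "of_real (\<Sum>r<m. (cmod (u r - v r))^2) = of_real (\<Sum>r<m. (cmod (u r))^2) - complex_of_real (\<Sum>k<n. (cmod (a k))^2)"
    using e1 unfolding ip_self .
  hence "(\<Sum>r<m. (cmod (u r - v r))^2) = (\<Sum>r<m. (cmod (u r))^2) - (\<Sum>k<n. (cmod (a k))^2)"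
    by (simp only: of_real_diff[symmetric] of_real_eq_iff)
  moreover have "0 \<le> (\<Sum>r<m. (cmod (u r - v r))^2)" by (auto intro: sum_nonneg)
  ultimately show ?thesis unfolding a_def by linarith
qed


lemma gram_psd: fixes X :: "complex mat" assumes Xc: "X \<in> carrier_mat m n"
  shows "is_psd n (mat_adjoint X * X)"
proof -
  let ?P = "mat_adjoint X * X"
  have Pc: "?P \<in> carrier_mat n n" using Xc by auto
  have PH: "mat_adjoint ?P = ?P" by (subst adj_mult[of _ n m _ n], insert Xc, auto)
  have "0 \<le> Re (conjugate v \<bullet> (?P *\<^sub>v v))" if v: "v \<in> carrier_vec n" for v
  proof -
    define y where "y r = (\<Sum>j<n. X $$ (r,j) * v $ j)" for r
    have "conjugate v \<bullet> (?P *\<^sub>v v) = (\<Sum>i<n. cnj (v $ i) * (\<Sum>j<n. (\<Sum>r<m. cnj (X $$ (r,i)) * X $$ (r,j)) * v $ j))"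
      unfolding qf_expand[OF Pc v]
      by (intro sum.cong refl arg_cong2[where f = "(*)"], insert Xc, auto simp: mult_idx[of _ n m _ n] simp del: index_mult_mat)
    also have "\<dots> = (\<Sum>i<n. \<Sum>j<n. \<Sum>r<m. cnj (v $ i) * cnj (X $$ (r,i)) * X $$ (r,j) * v $ j)"
      by (simp add: sum_distrib_left sum_distrib_right mult.assoc)
    also have "\<dots> = (\<Sum>r<m. \<Sum>i<n. \<Sum>j<n. cnj (v $ i) * cnj (X $$ (r,i)) * X $$ (r,j) * v $ j)"
      by (rule sum3_swap)
    also have "\<dots> = (\<Sum>r<m. \<Sum>i<n. \<Sum>j<n. (cnj (X $$ (r,i)) * cnj (v $ i)) * (X $$ (r,j) * v $ j))"
      by (intro sum.cong refl) (simp add: mult_ac)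
    also have "\<dots> = (\<Sum>r<m. cnj (y r) * y r)"
      unfolding y_def cnj_sum sum_product by simp
    also have "\<dots> = of_real (\<Sum>r<m. (cmod (y r))^2)"
      unfolding of_real_sum complex_norm_square by (simp add: mult.commute)
    finally show ?thesis by (simp add: sum_nonneg)
  qed
  thus ?thesis unfolding is_psd_def using Pc PH by auto
qed

lemma unitary_col_orth: assumes U: "unitary n U" and j: "j < n" and k: "k < n"
  shows "(\<Sum>c<n. cnj (U $$ (c,j)) * U $$ (c,k)) = (if j = k then 1 else 0)"
proof -
  have "(\<Sum>c<n. cnj (U $$ (c,j)) * U $$ (c,k)) = (mat_adjoint U * U) $$ (j,k)"
  proof -
    have Uc: "U \<in> carrier_mat n n" using U by auto
    show ?thesis by (subst mult_idx[of _ n n _ n], insert Uc j k, auto intro!: sum.cong)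
  qed
  thus ?thesis using U j k unfolding unitary_def by auto
qed

lemma unitary_bessel: assumes U: "unitary n U"
  shows "(\<Sum>k<n. (cmod (\<Sum>c<n. w c * U $$ (c,k)))^2) \<le> (\<Sum>c<n. (cmod (w c))^2)"
proof -
  have "(\<Sum>k<n. (cmod (\<Sum>c<n. cnj (cnj (U $$ (c,k))) * w c))^2) \<le> (\<Sum>c<n. (cmod (w c))^2)"
  proof (rule bessel[where P = "\<lambda>_. True"])
    fix j k assume j: "j < n" and k: "k < n"
    show "(\<Sum>r<n. cnj (cnj (U $$ (r, j))) * cnj (U $$ (r, k))) = (if j = k \<and> True then 1 else 0)"
      using unitary_col_orth[OF U k j] by (simp add: mult.commute)
  qed
  thus ?thesis by (simp add: mult.commute)
qed


lemma trace_bound: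
  fixes X :: "complex mat" and p :: "nat \<Rightarrow> real" and u w :: "nat \<Rightarrow> nat \<Rightarrow> complex"
  assumes Xc: "X \<in> carrier_mat m n"
    and Xe: "\<And>r c. r < m \<Longrightarrow> c < n \<Longrightarrow> X $$ (r,c) = (\<Sum>i<N. of_real (p i) * (u i r * w i c))"
    and p: "\<And>i. i < N \<Longrightarrow> p i \<ge> 0"
  shows "trace_norm X \<le> (\<Sum>i<N. p i * (sqrt (\<Sum>r<m. (cmod (u i r))^2) * sqrt (\<Sum>c<n. (cmod (w i c))^2)))"
proof -
  let ?P = "mat_adjoint X * X"
  have Ppsd: "is_psd n ?P" by (rule gram_psd[OF Xc])
  define S where "S = psd_sqrt ?P"
  from psd_sqrt_prop[OF Ppsd] have S: "is_psd n S" and SS: "S * S = ?P" unfolding S_def by auto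
  have tn: "trace_norm X = Re (mtrace S)" unfolding trace_norm_def S_def ..
  have Sc: "S \<in> carrier_mat n n" and SH: "mat_adjoint S = S" using S unfolding is_psd_def by auto
  from spectral[OF Sc SH] obtain U d where U: "unitary n U" and Se: "S = U * diagm n d * mat_adjoint U" by auto
  have d: "\<And>k. k < n \<Longrightarrow> d k \<ge> 0" using psd_diag_nonneg[OF S U Se] by auto
  have Uc: "U \<in> carrier_mat n n" "mat_adjoint U \<in> carrier_mat n n" using U by auto
  have trS: "mtrace S = (\<Sum>k<n. of_real (d k))"
  proof -
    have "mtrace S = (\<Sum>i<n. S $$ (i,i))" by (rule mtrace_sum[OF Sc])
    also have "\<dots> = (\<Sum>i<n. \<Sum>k<n. U $$ (i,k) * of_real (d k) * cnj (U $$ (i,k)))"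
      unfolding Se by (rule sum.cong[OF refl], rule udu_idx[OF Uc(1)]) auto
    also have "\<dots> = (\<Sum>k<n. \<Sum>i<n. U $$ (i,k) * of_real (d k) * cnj (U $$ (i,k)))" by (rule sum.swap)
    also have "\<dots> = (\<Sum>k<n. of_real (d k) * (\<Sum>i<n. cnj (U $$ (i,k)) * U $$ (i,k)))"
      by (simp add: sum_distrib_left mult_ac)
    also have "\<dots> = (\<Sum>k<n. of_real (d k))" by (rule sum.cong) (auto simp: unitary_col_orth[OF U])
    finally show ?thesis .
  qed
  define Y where "Y = X * U"
  have Yc: "Y \<in> carrier_mat m n" unfolding Y_def using Xc Uc by auto
  have YY: "mat_adjoint Y * Y = diagm n (\<lambda>k. d k * d k)"
  proof -
    have "mat_adjoint Y * Y = mat_adjoint U * (?P * U)"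
      unfolding Y_def using Xc Uc
      by (simp add: adj_mult[of _ m n _ n] assoc_mult_mat[of _ n m _ n _ n] assoc_mult_mat[of _ n n _ m _ n])
    also have "?P * U = U * diagm n (\<lambda>k. d k * d k)"
    proof -
      have "?P * U = U * diagm n (\<lambda>k. d k * d k) * (mat_adjoint U * U)"
        unfolding SS[symmetric] Se udu_sq[OF U] using Uc by (simp add: sq_assoc[of _ n] sq_cl[of _ n])
      also have "mat_adjoint U * U = 1\<^sub>m n" using U unfolding unitary_def by auto
      finally show ?thesis using right_mult_one_mat[OF mult_carrier_mat[OF Uc(1) diagm_carrier]] by simp
    qed
    also have "mat_adjoint U * (U * diagm n (\<lambda>k. d k * d k)) = diagm n (\<lambda>k. d k * d k)"
      by (rule unitary_left[OF U diagm_carrier])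
    finally show ?thesis .
  qed
  have Yorth: "(\<Sum>r<m. cnj (Y $$ (r,j)) * Y $$ (r,k)) = (if j = k then of_real (d k * d k) else 0)"
    if j: "j < n" and k: "k < n" for j k
  proof -
    have "(\<Sum>r<m. cnj (Y $$ (r,j)) * Y $$ (r,k)) = (mat_adjoint Y * Y) $$ (j,k)"
      by (subst mult_idx[of _ n m _ n], insert Yc j k, auto intro!: sum.cong)
    thus ?thesis unfolding YY using j k by (simp add: diagm_def)
  qed
  define q where "q k r = (if d k > 0 then Y $$ (r,k) / of_real (d k) else 0)" for k r
  have qorth: "(\<Sum>r<m. cnj (q j r) * q k r) = (if j = k \<and> d k > 0 then 1 else 0)"
    if j: "j < n" and k: "k < n" for j k
  proof (cases "d j > 0 \<and> d k > 0")
    case True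
    have "(\<Sum>r<m. cnj (q j r) * q k r) = (\<Sum>r<m. cnj (Y $$ (r,j)) * Y $$ (r,k)) / (of_real (d j) * of_real (d k))"
      unfolding q_def using True by (simp add: sum_divide_distrib)
    also have "\<dots> = (if j = k \<and> d k > 0 then 1 else 0)" unfolding Yorth[OF j k] using True by auto
    finally show ?thesis .
  next
    case False
    thus ?thesis unfolding q_def by auto
  qed
  have dk: "of_real (d k) = (\<Sum>r<m. cnj (q k r) * Y $$ (r,k))" if k: "k < n" for k
  proof (cases "d k > 0")
    case True
    have "(\<Sum>r<m. cnj (q k r) * Y $$ (r,k)) = (\<Sum>r<m. cnj (Y $$ (r,k)) * Y $$ (r,k)) / of_real (d k)"
      unfolding q_def using True by (simp add: sum_divide_distrib)
    also have "\<dots> = of_real (d k)" unfolding Yorth[OF k k] using True by (simp add: power2_eq_square)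
    finally show ?thesis by simp
  next
    case False
    hence "d k = 0" using d[OF k] by auto
    thus ?thesis unfolding q_def by simp
  qed
  define z where "z i k = (\<Sum>c<n. w i c * U $$ (c,k))" for i k
  have Ye: "Y $$ (r,k) = (\<Sum>i<N. of_real (p i) * (u i r * z i k))" if r: "r < m" and k: "k < n" for r k
  proof -
    have "Y $$ (r,k) = (\<Sum>c<n. (\<Sum>i<N. of_real (p i) * (u i r * w i c)) * U $$ (c,k))"
      unfolding Y_def by (subst mult_idx[of _ m n _ n], insert Xc Uc r k, auto simp: Xe simp del: index_mult_mat)
    also have "\<dots> = (\<Sum>c<n. \<Sum>i<N. of_real (p i) * (u i r * (w i c * U $$ (c,k))))"
      unfolding sum_distrib_right by (simp add: mult_ac)
    also have "\<dots> = (\<Sum>i<N. \<Sum>c<n. of_real (p i) * (u i r * (w i c * U $$ (c,k))))" by (rule sum.swap)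
    also have "\<dots> = (\<Sum>i<N. of_real (p i) * (u i r * z i k))"
      unfolding z_def by (simp add: sum_distrib_left)
    finally show ?thesis .
  qed
  define a where "a i k = (\<Sum>r<m. cnj (q k r) * u i r)" for i k
  have main: "(\<Sum>k<n. complex_of_real (d k)) = (\<Sum>i<N. of_real (p i) * (\<Sum>k<n. a i k * z i k))"
  proof -
    have "(\<Sum>k<n. complex_of_real (d k)) = (\<Sum>k<n. \<Sum>r<m. \<Sum>i<N. cnj (q k r) * (of_real (p i) * (u i r * z i k)))"
      by (rule sum.cong[OF refl]) (simp add: dk Ye sum_distrib_left)
    also have "\<dots> = (\<Sum>i<N. \<Sum>k<n. \<Sum>r<m. cnj (q k r) * (of_real (p i) * (u i r * z i k)))"
      by (rule sum3_swap)
    also have "\<dots> = (\<Sum>i<N. of_real (p i) * (\<Sum>k<n. a i k * z i k))"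
      unfolding a_def by (simp add: sum_distrib_left sum_distrib_right mult_ac)
    finally show ?thesis .
  qed
  have "trace_norm X = Re (\<Sum>i<N. of_real (p i) * (\<Sum>k<n. a i k * z i k))"
    unfolding tn trS main ..
  also have "\<dots> \<le> cmod (\<Sum>i<N. of_real (p i) * (\<Sum>k<n. a i k * z i k))" by (rule complex_Re_le_cmod)
  also have "\<dots> \<le> (\<Sum>i<N. p i * cmod (\<Sum>k<n. a i k * z i k))"
    by (rule order_trans[OF norm_sum]) (auto simp: norm_mult p)
  also have "\<dots> \<le> (\<Sum>i<N. p i * (sqrt (\<Sum>r<m. (cmod (u i r))^2) * sqrt (\<Sum>c<n. (cmod (w i c))^2)))"
  proof (rule sum_mono, rule mult_left_mono)
    fix i assume i: "i \<in> {..<N}"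
    show "0 \<le> p i" using i p by auto
    have "cmod (\<Sum>k<n. a i k * z i k) \<le> sqrt (\<Sum>k<n. (cmod (a i k))^2) * sqrt (\<Sum>k<n. (cmod (z i k))^2)"
      by (rule complex_cs) auto
    also have "\<dots> \<le> sqrt (\<Sum>r<m. (cmod (u i r))^2) * sqrt (\<Sum>c<n. (cmod (w i c))^2)"
    proof (rule mult_mono)
      show "sqrt (\<Sum>k<n. (cmod (a i k))^2) \<le> sqrt (\<Sum>r<m. (cmod (u i r))^2)"
        unfolding a_def by (rule real_sqrt_le_mono, rule bessel[where P = "\<lambda>k. d k > 0"], rule qorth)
      show "sqrt (\<Sum>k<n. (cmod (z i k))^2) \<le> sqrt (\<Sum>c<n. (cmod (w i c))^2)"
        unfolding z_def by (rule real_sqrt_le_mono, rule unitary_bessel[OF U])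
    qed (auto intro: sum_nonneg)
    finally show "cmod (\<Sum>k<n. a i k * z i k) \<le> sqrt (\<Sum>r<m. (cmod (u i r))^2) * sqrt (\<Sum>c<n. (cmod (w i c))^2)" .
  qed
  finally show ?thesis .
qed


lemma cmod_diff_sq: "(cmod (z - w))^2 = (cmod z)^2 - 2 * Re (cnj w * z) + (cmod w)^2"
  by (simp only: cmod_power2) (simp add: power2_eq_square algebra_simps)

lemma cmod_sq_re: "(cmod z)^2 = Re (cnj z * z)"
  by (simp only: cmod_power2) (simp add: power2_eq_square)

lemma gram_expand:
  fixes f :: "'a \<Rightarrow> complex" and g :: "nat \<Rightarrow> 'a \<Rightarrow> complex" and \<gamma> :: "nat \<Rightarrow> real"
  assumes T: "finite T" and A: "finite A"
  shows "(\<Sum>t\<in>T. (cmod (f t - (\<Sum>\<alpha>\<in>A. of_real (\<gamma> \<alpha>) * g \<alpha> t)))^2)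
    = (\<Sum>t\<in>T. (cmod (f t))^2) - 2 * (\<Sum>\<alpha>\<in>A. \<gamma> \<alpha> * Re (\<Sum>t\<in>T. cnj (g \<alpha> t) * f t))
      + (\<Sum>\<alpha>\<in>A. \<Sum>\<beta>\<in>A. \<gamma> \<alpha> * \<gamma> \<beta> * Re (\<Sum>t\<in>T. cnj (g \<alpha> t) * g \<beta> t))"
proof -
  define h where "h t = (\<Sum>\<alpha>\<in>A. of_real (\<gamma> \<alpha>) * g \<alpha> t)" for t
  have ch: "cnj (h t) = (\<Sum>\<alpha>\<in>A. of_real (\<gamma> \<alpha>) * cnj (g \<alpha> t))" for t
    unfolding h_def by (simp add: cnj_sum)
  have s1: "(\<Sum>t\<in>T. Re (cnj (h t) * f t)) = (\<Sum>\<alpha>\<in>A. \<gamma> \<alpha> * Re (\<Sum>t\<in>T. cnj (g \<alpha> t) * f t))"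
  proof -
    have "(\<Sum>t\<in>T. Re (cnj (h t) * f t)) = (\<Sum>t\<in>T. \<Sum>\<alpha>\<in>A. \<gamma> \<alpha> * Re (cnj (g \<alpha> t) * f t))"
      unfolding ch sum_distrib_right Re_sum by (simp add: mult.assoc)
    also have "\<dots> = (\<Sum>\<alpha>\<in>A. \<Sum>t\<in>T. \<gamma> \<alpha> * Re (cnj (g \<alpha> t) * f t))" by (rule sum.swap)
    also have "\<dots> = (\<Sum>\<alpha>\<in>A. \<gamma> \<alpha> * Re (\<Sum>t\<in>T. cnj (g \<alpha> t) * f t))"
      unfolding Re_sum sum_distrib_left by (rule refl)
    finally show ?thesis .
  qed
  have s2: "(\<Sum>t\<in>T. (cmod (h t))^2) = (\<Sum>\<alpha>\<in>A. \<Sum>\<beta>\<in>A. \<gamma> \<alpha> * \<gamma> \<beta> * Re (\<Sum>t\<in>T. cnj (g \<alpha> t) * g \<beta> t))"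
  proof -
    have "(\<Sum>t\<in>T. (cmod (h t))^2) = (\<Sum>t\<in>T. \<Sum>\<alpha>\<in>A. \<Sum>\<beta>\<in>A. \<gamma> \<alpha> * \<gamma> \<beta> * Re (cnj (g \<alpha> t) * g \<beta> t))"
    proof (rule sum.cong[OF refl])
      fix t
      have "cnj (h t) * h t = (\<Sum>\<alpha>\<in>A. \<Sum>\<beta>\<in>A. of_real (\<gamma> \<alpha> * \<gamma> \<beta>) * (cnj (g \<alpha> t) * g \<beta> t))"
        unfolding ch unfolding h_def sum_product by (simp add: mult_ac)
      thus "(cmod (h t))^2 = (\<Sum>\<alpha>\<in>A. \<Sum>\<beta>\<in>A. \<gamma> \<alpha> * \<gamma> \<beta> * Re (cnj (g \<alpha> t) * g \<beta> t))"
        unfolding cmod_sq_re by (simp add: Re_sum)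
    qed
    also have "\<dots> = (\<Sum>\<alpha>\<in>A. \<Sum>\<beta>\<in>A. \<Sum>t\<in>T. \<gamma> \<alpha> * \<gamma> \<beta> * Re (cnj (g \<alpha> t) * g \<beta> t))"
    proof -
      have "(\<Sum>t\<in>T. \<Sum>\<alpha>\<in>A. \<Sum>\<beta>\<in>A. \<gamma> \<alpha> * \<gamma> \<beta> * Re (cnj (g \<alpha> t) * g \<beta> t))
          = (\<Sum>\<alpha>\<in>A. \<Sum>t\<in>T. \<Sum>\<beta>\<in>A. \<gamma> \<alpha> * \<gamma> \<beta> * Re (cnj (g \<alpha> t) * g \<beta> t))" by (rule sum.swap)
      also have "\<dots> = (\<Sum>\<alpha>\<in>A. \<Sum>\<beta>\<in>A. \<Sum>t\<in>T. \<gamma> \<alpha> * \<gamma> \<beta> * Re (cnj (g \<alpha> t) * g \<beta> t))"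
        by (rule sum.cong[OF refl], rule sum.swap)
      finally show ?thesis .
    qed
    also have "\<dots> = (\<Sum>\<alpha>\<in>A. \<Sum>\<beta>\<in>A. \<gamma> \<alpha> * \<gamma> \<beta> * Re (\<Sum>t\<in>T. cnj (g \<alpha> t) * g \<beta> t))"
      unfolding Re_sum sum_distrib_left by (rule refl)
    finally show ?thesis .
  qed
  have "(\<Sum>t\<in>T. (cmod (f t - h t))^2) = (\<Sum>t\<in>T. (cmod (f t))^2) - 2 * (\<Sum>t\<in>T. Re (cnj (h t) * f t)) + (\<Sum>t\<in>T. (cmod (h t))^2)"
    unfolding cmod_diff_sq by (simp add: sum.distrib sum_subtractf sum_distrib_left)
  hence "(\<Sum>t\<in>T. (cmod (f t - h t))^2) = (\<Sum>t\<in>T. (cmod (f t))^2) - 2 * (\<Sum>\<alpha>\<in>A. \<gamma> \<alpha> * Re (\<Sum>t\<in>T. cnj (g \<alpha> t) * f t))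
      + (\<Sum>\<alpha>\<in>A. \<Sum>\<beta>\<in>A. \<gamma> \<alpha> * \<gamma> \<beta> * Re (\<Sum>t\<in>T. cnj (g \<alpha> t) * g \<beta> t))"
    unfolding s1 s2 .
  thus ?thesis unfolding h_def .
qed


lemma mtrace_mult: assumes "A \<in> carrier_mat n m" "B \<in> carrier_mat m n"
  shows "mtrace (A * B) = (\<Sum>i<n. \<Sum>j<m. A $$ (i,j) * B $$ (j,i))"
  unfolding mtrace_sum[OF mult_carrier_mat[OF assms]]
  by (rule sum.cong[OF refl], rule mult_idx[OF assms]) auto

lemma mtrace_comm: assumes "A \<in> carrier_mat n m" "B \<in> carrier_mat m n"
  shows "mtrace (A * B) = mtrace (B * A)"
  unfolding mtrace_mult[OF assms] mtrace_mult[OF assms(2,1)]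
  by (subst sum.swap) (simp add: mult.commute)

lemma herm_idx: fixes A :: "complex mat" assumes "A \<in> carrier_mat n n" "mat_adjoint A = A" "i < n" "j < n"
  shows "A $$ (j,i) = cnj (A $$ (i,j))"
proof -
  have "mat_adjoint A $$ (j,i) = cnj (A $$ (i,j))" by (rule adj_idx) (use assms in auto)
  thus ?thesis using assms(2) by simp
qed

lemma hs_trace: fixes A B :: "complex mat"
  assumes A: "A \<in> carrier_mat n n" and AH: "mat_adjoint A = A" and B: "B \<in> carrier_mat n n"
  shows "(\<Sum>t\<in>{..<n}\<times>{..<n}. cnj (A $$ t) * B $$ t) = mtrace (A * B)"
proof -
  have "(\<Sum>t\<in>{..<n}\<times>{..<n}. cnj (A $$ t) * B $$ t) = (\<Sum>i<n. \<Sum>j<n. cnj (A $$ (i,j)) * B $$ (i,j))"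
    by (simp add: sum.cartesian_product)
  also have "\<dots> = (\<Sum>i<n. \<Sum>j<n. A $$ (j,i) * B $$ (i,j))"
  proof (intro sum.cong refl)
    fix i j assume "i \<in> {..<n}" "j \<in> {..<n}"
    hence "cnj (A $$ (i,j)) = A $$ (j,i)" using herm_idx[OF A AH, of i j] by auto
    thus "cnj (A $$ (i,j)) * B $$ (i,j) = A $$ (j,i) * B $$ (i,j)" by simp
  qed
  also have "\<dots> = (\<Sum>j<n. \<Sum>i<n. A $$ (j,i) * B $$ (i,j))" by (rule sum.swap)
  also have "\<dots> = mtrace (A * B)" unfolding mtrace_mult[OF A B] ..
  finally show ?thesis .
qed

lemma udu_trace: assumes U: "unitary n U"
  shows "mtrace (U * diagm n d * mat_adjoint U) = (\<Sum>k<n. complex_of_real (d k))"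
proof -
  have Uc: "U \<in> carrier_mat n n" using U by auto
  have "mtrace (U * diagm n d * mat_adjoint U) = (\<Sum>i<n. (U * diagm n d * mat_adjoint U) $$ (i,i))"
    by (rule mtrace_sum) (use Uc in auto)
  also have "\<dots> = (\<Sum>i<n. \<Sum>k<n. U $$ (i,k) * of_real (d k) * cnj (U $$ (i,k)))"
    by (rule sum.cong[OF refl], rule udu_idx[OF Uc]) auto
  also have "\<dots> = (\<Sum>k<n. \<Sum>i<n. U $$ (i,k) * of_real (d k) * cnj (U $$ (i,k)))" by (rule sum.swap)
  also have "\<dots> = (\<Sum>k<n. of_real (d k) * (\<Sum>i<n. cnj (U $$ (i,k)) * U $$ (i,k)))"
    by (simp add: sum_distrib_left mult_ac)
  also have "\<dots> = (\<Sum>k<n. of_real (d k))" by (rule sum.cong) (auto simp: unitary_col_orth[OF U])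
  finally show ?thesis .
qed

lemma purity: assumes D: "is_density n \<rho>"
  shows "(\<Sum>t\<in>{..<n}\<times>{..<n}. (cmod (\<rho> $$ t))^2) \<le> 1"
proof -
  have P: "is_psd n \<rho>" and tr: "mtrace \<rho> = 1" using D unfolding is_density_def by auto
  have Rc: "\<rho> \<in> carrier_mat n n" and RH: "mat_adjoint \<rho> = \<rho>" using P unfolding is_psd_def by auto
  from spectral[OF Rc RH] obtain U d where U: "unitary n U" and Re: "\<rho> = U * diagm n d * mat_adjoint U" by auto
  have d: "\<And>k. k < n \<Longrightarrow> d k \<ge> 0" using psd_diag_nonneg[OF P U Re] by auto
  have s1: "(\<Sum>k<n. d k) = 1"
  proof -
    have "complex_of_real (\<Sum>k<n. d k) = 1" using tr unfolding Re udu_trace[OF U] by simp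
    thus ?thesis by (metis of_real_eq_1_iff)
  qed
  have "complex_of_real (\<Sum>t\<in>{..<n}\<times>{..<n}. (cmod (\<rho> $$ t))^2) = (\<Sum>t\<in>{..<n}\<times>{..<n}. cnj (\<rho> $$ t) * \<rho> $$ t)"
    unfolding of_real_sum complex_norm_square by (simp add: mult.commute)
  also have "\<dots> = mtrace (\<rho> * \<rho>)" by (rule hs_trace[OF Rc RH Rc])
  also have "\<rho> * \<rho> = U * diagm n (\<lambda>k. d k * d k) * mat_adjoint U" unfolding Re by (rule udu_sq[OF U])
  also have "mtrace \<dots> = complex_of_real (\<Sum>k<n. d k * d k)" unfolding udu_trace[OF U] by simp
  finally have eq: "(\<Sum>t\<in>{..<n}\<times>{..<n}. (cmod (\<rho> $$ t))^2) = (\<Sum>k<n. d k * d k)"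
    by (simp only: of_real_eq_iff)
  have "(\<Sum>k<n. d k * d k) \<le> (\<Sum>k<n. d k * 1)"
  proof (rule sum_mono, rule mult_left_mono)
    fix k assume k: "k \<in> {..<n}"
    show "d k \<le> 1" unfolding s1[symmetric] by (rule member_le_sum) (use k d in auto)
    show "0 \<le> d k" using k d by auto
  qed
  thus ?thesis unfolding eq using s1 by simp
qed


lemma gsic_arith: fixes a b dd :: real
  assumes dd2: "dd \<ge> 2" and bdef: "b = (1 - dd * a) / (dd * (dd^2 - 1))" and ad3: "a * dd^3 > 1"
  shows "a - b > 0 \<and> 1 - dd^2 * b * dd = dd * (a - b) \<and> a - b + b * dd^2 = 1 / dd \<and> (a - b) + b * dd = (a * dd^2 + 1) / (dd * (dd + 1))"
proof -
  have d1: "dd^2 - 1 > 0" using dd2 by (simp add: power2_eq_square) (smt (verit) mult_less_cancel_left1)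
  have den: "dd * (dd^2 - 1) > 0" using dd2 d1 by simp
  have D0: "dd * (dd^2 - 1) \<noteq> 0" using den by (metis less_irrefl)
  have bD: "b * (dd * (dd^2 - 1)) = 1 - dd * a" unfolding bdef using D0 by simp
  have amb: "(a - b) * (dd * (dd^2 - 1)) = a * (dd * dd * dd) - 1"
  proof -
    have "(a - b) * (dd * (dd^2 - 1)) = a * (dd * (dd^2 - 1)) - b * (dd * (dd^2 - 1))" by (simp add: algebra_simps)
    also have "\<dots> = a * (dd * (dd^2 - 1)) - (1 - dd * a)" using bD by simp
    also have "\<dots> = a * (dd * dd * dd) - 1" by (simp add: algebra_simps power2_eq_square)
    finally show ?thesis .
  qed
  have ab: "a - b > 0"
  proof -
    have "(a - b) * (dd * (dd^2 - 1)) > 0" unfolding amb using ad3 by (simp add: power3_eq_cube)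
    thus ?thesis using den by (simp add: zero_less_mult_iff)
  qed
  have k1: "1 - dd^2 * b * dd = dd * (a - b)"
  proof -
    have "dd^2 * b * dd = b * (dd * (dd^2 - 1)) + b * dd" by (simp add: algebra_simps power2_eq_square)
    also have "\<dots> = 1 - dd * a + b * dd" using bD by simp
    finally show ?thesis by (simp add: algebra_simps)
  qed
  have k3': "dd * (a - b + b * dd^2) = 1"
  proof -
    have "dd * (a - b + b * dd^2) = dd * a + b * (dd * (dd^2 - 1))" by (simp add: algebra_simps power2_eq_square)
    thus ?thesis using bD by simp
  qed
  have k3: "a - b + b * dd^2 = 1 / dd" using k3' dd2 by (simp add: field_simps)
  have k2': "((a - b) + b * dd) * (dd * (dd + 1)) = a * dd^2 + 1"
  proof -
    have "((a - b) + b * dd) * (dd * (dd + 1)) = a * dd^2 + a * dd + b * (dd * (dd^2 - 1))" by (simp add: algebra_simps power2_eq_square)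
    thus ?thesis using bD by simp
  qed
  have nz: "dd * (dd + 1) \<noteq> 0" using dd2 by simp
  have k2: "(a - b) + b * dd = (a * dd^2 + 1) / (dd * (dd + 1))" using k2' nz by (subst eq_divide_eq) simp
  show ?thesis using ab k1 k2 k3 by auto
qed

lemma gsic_d2: assumes "is_GSICPOVM d a M" shows "d \<ge> 2"
proof (rule ccontr)
  assume "\<not> d \<ge> 2"
  hence "d = 0 \<or> d = 1" by auto
  thus False using assms unfolding is_GSICPOVM_def by auto
qed

lemma gsic_bound:
  assumes G: "is_GSICPOVM d a M" and D: "is_density d \<rho>"
  shows "(\<Sum>\<alpha><d^2. (cmod (mtrace (M \<alpha> * \<rho>)))^2) \<le> (a * real d ^ 2 + 1) / (real d * (real d + 1))"
proof -
  define b where "b = (1 - real d * a) / (real d * ((real d)^2 - 1))"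
  have a1: "1 / real d ^ 3 < a" and Mp: "\<And>k. k < d^2 \<Longrightarrow> is_psd d (M k)"
    and sumI: "\<And>i j. i < d \<Longrightarrow> j < d \<Longrightarrow> (\<Sum>k<d^2. M k $$ (i,j)) = 1\<^sub>m d $$ (i,j)"
    and Msq: "\<And>k. k < d^2 \<Longrightarrow> mtrace (M k * M k) = of_real a"
    and Moff: "\<And>k l. k < d^2 \<Longrightarrow> l < d^2 \<Longrightarrow> k \<noteq> l \<Longrightarrow> mtrace (M k * M l) = of_real b"
    using G unfolding is_GSICPOVM_def b_def by auto
  have d2: "d \<ge> 2" by (rule gsic_d2[OF G])
  define dd where "dd = real d"
  have dd2: "dd \<ge> 2" unfolding dd_def using d2 by simp
  have ad3: "a * dd^3 > 1"
  proof -
    have "dd^3 > 0" using dd2 by simp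
    thus ?thesis using a1 unfolding dd_def by (simp add: pos_divide_less_eq mult.commute)
  qed
  have bdef: "b = (1 - dd * a) / (dd * (dd^2 - 1))" unfolding b_def dd_def ..
  from gsic_arith[OF dd2 bdef ad3] have ab: "a - b > 0" and k1: "1 - dd^2 * b * dd = dd * (a - b)"
    and k3: "a - b + b * dd^2 = 1 / dd" and k2: "(a - b) + b * dd = (a * dd^2 + 1) / (dd * (dd + 1))" by auto
  have P: "is_psd d \<rho>" and tr: "mtrace \<rho> = 1" using D unfolding is_density_def by auto
  have Rc: "\<rho> \<in> carrier_mat d d" and RH: "mat_adjoint \<rho> = \<rho>" using P unfolding is_psd_def by auto
  have Mc: "\<And>k. k < d^2 \<Longrightarrow> M k \<in> carrier_mat d d" and MH: "\<And>k. k < d^2 \<Longrightarrow> mat_adjoint (M k) = M k"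
    using Mp unfolding is_psd_def by auto
  define T where "T = {..<d} \<times> {..<d}"
  define c where "c \<alpha> = mtrace (M \<alpha> * \<rho>)" for \<alpha>
  define x where "x \<alpha> = Re (c \<alpha>)" for \<alpha>
  have creal: "c \<alpha> = of_real (x \<alpha>)" if \<alpha>: "\<alpha> < d^2" for \<alpha>
  proof -
    have "c \<alpha> = (\<Sum>t\<in>T. cnj (M \<alpha> $$ t) * \<rho> $$ t)"
      unfolding c_def T_def by (rule hs_trace[OF Mc[OF \<alpha>] MH[OF \<alpha>] Rc, symmetric])
    hence "cnj (c \<alpha>) = (\<Sum>t\<in>T. cnj (\<rho> $$ t) * M \<alpha> $$ t)" by (simp add: cnj_sum mult.commute)
    also have "\<dots> = mtrace (\<rho> * M \<alpha>)" unfolding T_def by (rule hs_trace[OF Rc RH Mc[OF \<alpha>]])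
    also have "\<dots> = c \<alpha>" unfolding c_def by (rule mtrace_comm[OF Rc Mc[OF \<alpha>]])
    finally have "cnj (c \<alpha>) = c \<alpha>" .
    thus ?thesis unfolding x_def by (metis Reals_cnj_iff complex_is_Real_iff of_real_Re)
  qed
  have sumc: "(\<Sum>\<alpha><d^2. c \<alpha>) = 1"
  proof -
    have "(\<Sum>\<alpha><d^2. c \<alpha>) = (\<Sum>\<alpha><d^2. \<Sum>i<d. \<Sum>j<d. M \<alpha> $$ (i,j) * \<rho> $$ (j,i))"
      unfolding c_def by (rule sum.cong[OF refl], rule mtrace_mult[OF Mc Rc]) auto
    also have "\<dots> = (\<Sum>i<d. \<Sum>\<alpha><d^2. \<Sum>j<d. M \<alpha> $$ (i,j) * \<rho> $$ (j,i))" by (rule sum.swap)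
    also have "\<dots> = (\<Sum>i<d. \<Sum>j<d. \<Sum>\<alpha><d^2. M \<alpha> $$ (i,j) * \<rho> $$ (j,i))"
      by (rule sum.cong[OF refl], rule sum.swap)
    also have "\<dots> = (\<Sum>i<d. \<Sum>j<d. 1\<^sub>m d $$ (i,j) * \<rho> $$ (j,i))"
      by (intro sum.cong refl) (simp add: sum_distrib_right[symmetric] sumI)
    also have "\<dots> = (\<Sum>i<d. \<rho> $$ (i,i))"
    proof (rule sum.cong[OF refl])
      fix i assume i: "i \<in> {..<d}"
      have "(\<Sum>j<d. 1\<^sub>m d $$ (i,j) * \<rho> $$ (j,i)) = (\<Sum>j<d. if j = i then \<rho> $$ (i,i) else 0)"
        by (rule sum.cong) (use i in auto)
      also have "\<dots> = \<rho> $$ (i,i)" using i by (simp add: sum.delta)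
      finally show "(\<Sum>j<d. 1\<^sub>m d $$ (i,j) * \<rho> $$ (j,i)) = \<rho> $$ (i,i)" .
    qed
    also have "\<dots> = 1" using tr mtrace_sum[OF Rc] by simp
    finally show ?thesis .
  qed
  have sumx: "(\<Sum>\<alpha><d^2. x \<alpha>) = 1"
  proof -
    have "complex_of_real (\<Sum>\<alpha><d^2. x \<alpha>) = (\<Sum>\<alpha><d^2. c \<alpha>)"
      unfolding of_real_sum by (rule sum.cong) (auto simp: creal)
    thus ?thesis unfolding sumc by (metis of_real_eq_1_iff)
  qed
  have cx: "Re (\<Sum>t\<in>T. cnj (M \<alpha> $$ t) * \<rho> $$ t) = x \<alpha>" if "\<alpha> < d^2" for \<alpha>
    unfolding T_def hs_trace[OF Mc[OF that] MH[OF that] Rc] x_def c_def ..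
  have Gam: "Re (\<Sum>t\<in>T. cnj (M \<alpha> $$ t) * M \<beta> $$ t) = (if \<alpha> = \<beta> then a else b)"
    if "\<alpha> < d^2" "\<beta> < d^2" for \<alpha> \<beta>
    unfolding T_def hs_trace[OF Mc[OF that(1)] MH[OF that(1)] Mc[OF that(2)]] using that Msq Moff by auto
  define e where "e \<alpha> = x \<alpha> - b * dd" for \<alpha>
  define kap where "kap = 1 / (a - b)"
  define \<gamma> where "\<gamma> \<alpha> = kap * e \<alpha>" for \<alpha>
  define N where "N = d^2"
  define E1 where "E1 = (\<Sum>\<alpha><N. e \<alpha>)"
  define E2 where "E2 = (\<Sum>\<alpha><N. (e \<alpha>)^2)"
  define PP where "PP = (\<Sum>t\<in>T. (cmod (\<rho> $$ t))^2)"
  have PP1: "PP \<le> 1" unfolding PP_def T_def by (rule purity[OF D])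
  have rN: "real N = dd^2" unfolding N_def dd_def by simp
  have E1v: "E1 = 1 - dd^2 * b * dd"
    unfolding E1_def e_def using sumx rN by (simp add: sum_subtractf N_def)
  have H: "0 \<le> PP - 2 * (\<Sum>\<alpha><N. \<gamma> \<alpha> * x \<alpha>) + (\<Sum>\<alpha><N. \<Sum>\<beta><N. \<gamma> \<alpha> * \<gamma> \<beta> * (if \<alpha> = \<beta> then a else b))"
  proof -
    have "0 \<le> (\<Sum>t\<in>T. (cmod (\<rho> $$ t - (\<Sum>\<alpha><N. of_real (\<gamma> \<alpha>) * M \<alpha> $$ t)))^2)"
      by (auto intro: sum_nonneg)
    also have "\<dots> = PP - 2 * (\<Sum>\<alpha><N. \<gamma> \<alpha> * Re (\<Sum>t\<in>T. cnj (M \<alpha> $$ t) * \<rho> $$ t))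
      + (\<Sum>\<alpha><N. \<Sum>\<beta><N. \<gamma> \<alpha> * \<gamma> \<beta> * Re (\<Sum>t\<in>T. cnj (M \<alpha> $$ t) * M \<beta> $$ t))"
      unfolding PP_def by (rule gram_expand) (auto simp: T_def)
    also have "(\<Sum>\<alpha><N. \<gamma> \<alpha> * Re (\<Sum>t\<in>T. cnj (M \<alpha> $$ t) * \<rho> $$ t)) = (\<Sum>\<alpha><N. \<gamma> \<alpha> * x \<alpha>)"
    proof (rule sum.cong[OF refl])
      fix \<alpha> assume "\<alpha> \<in> {..<N}"
      hence "\<alpha> < d^2" by (simp add: N_def)
      show "\<gamma> \<alpha> * Re (\<Sum>t\<in>T. cnj (M \<alpha> $$ t) * \<rho> $$ t) = \<gamma> \<alpha> * x \<alpha>" by (simp only: cx[OF \<open>\<alpha> < d^2\<close>])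
    qed
    also have "(\<Sum>\<alpha><N. \<Sum>\<beta><N. \<gamma> \<alpha> * \<gamma> \<beta> * Re (\<Sum>t\<in>T. cnj (M \<alpha> $$ t) * M \<beta> $$ t))
       = (\<Sum>\<alpha><N. \<Sum>\<beta><N. \<gamma> \<alpha> * \<gamma> \<beta> * (if \<alpha> = \<beta> then a else b))"
    proof (intro sum.cong refl)
      fix \<alpha> \<beta> assume "\<alpha> \<in> {..<N}" "\<beta> \<in> {..<N}"
      hence h: "\<alpha> < d^2" "\<beta> < d^2" by (auto simp: N_def)
      show "\<gamma> \<alpha> * \<gamma> \<beta> * Re (\<Sum>t\<in>T. cnj (M \<alpha> $$ t) * M \<beta> $$ t) = \<gamma> \<alpha> * \<gamma> \<beta> * (if \<alpha> = \<beta> then a else b)"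
        by (simp only: Gam[OF h])
    qed
    finally show ?thesis .
  qed
  have QQ: "(\<Sum>\<alpha><N. \<Sum>\<beta><N. \<gamma> \<alpha> * \<gamma> \<beta> * (if \<alpha> = \<beta> then a else b))
      = b * (\<Sum>\<alpha><N. \<gamma> \<alpha>)^2 + (a - b) * (\<Sum>\<alpha><N. (\<gamma> \<alpha>)^2)"
  proof -
    have inner: "(\<Sum>\<beta><N. \<gamma> \<alpha> * \<gamma> \<beta> * (if \<alpha> = \<beta> then a else b)) = b * (\<gamma> \<alpha> * (\<Sum>\<beta><N. \<gamma> \<beta>)) + (a - b) * (\<gamma> \<alpha>)^2"
      if "\<alpha> < N" for \<alpha>
    proof -
      have "(\<Sum>\<beta><N. \<gamma> \<alpha> * \<gamma> \<beta> * (if \<alpha> = \<beta> then a else b))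
          = (\<Sum>\<beta><N. b * (\<gamma> \<alpha> * \<gamma> \<beta>) + (if \<beta> = \<alpha> then (a - b) * (\<gamma> \<alpha>)^2 else 0))"
        by (rule sum.cong) (auto simp: algebra_simps power2_eq_square)
      also have "\<dots> = b * (\<gamma> \<alpha> * (\<Sum>\<beta><N. \<gamma> \<beta>)) + (a - b) * (\<gamma> \<alpha>)^2"
        using that by (simp add: sum.distrib sum_distrib_left sum.delta)
      finally show ?thesis .
    qed
    have "(\<Sum>\<alpha><N. \<Sum>\<beta><N. \<gamma> \<alpha> * \<gamma> \<beta> * (if \<alpha> = \<beta> then a else b))
        = (\<Sum>\<alpha><N. b * (\<gamma> \<alpha> * (\<Sum>\<beta><N. \<gamma> \<beta>)) + (a - b) * (\<gamma> \<alpha>)^2)"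
      by (rule sum.cong) (auto simp: inner)
    also have "\<dots> = b * (\<Sum>\<alpha><N. \<gamma> \<alpha>)^2 + (a - b) * (\<Sum>\<alpha><N. (\<gamma> \<alpha>)^2)"
      by (simp add: sum.distrib sum_distrib_left[symmetric] sum_distrib_right[symmetric] power2_eq_square)
    finally show ?thesis .
  qed
  have g1: "(\<Sum>\<alpha><N. \<gamma> \<alpha>) = kap * E1" unfolding \<gamma>_def E1_def by (simp add: sum_distrib_left)
  have g2: "(\<Sum>\<alpha><N. (\<gamma> \<alpha>)^2) = kap^2 * E2" unfolding \<gamma>_def E2_def by (simp add: sum_distrib_left power_mult_distrib)
  have g3: "(\<Sum>\<alpha><N. \<gamma> \<alpha> * x \<alpha>) = kap * (E2 + b * dd * E1)"
  proof -
    have "(\<Sum>\<alpha><N. \<gamma> \<alpha> * x \<alpha>) = (\<Sum>\<alpha><N. kap * ((e \<alpha>)^2 + b * dd * e \<alpha>))"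
      by (rule sum.cong) (auto simp: \<gamma>_def e_def algebra_simps power2_eq_square)
    thus ?thesis unfolding E1_def E2_def by (simp add: sum.distrib sum_distrib_left[symmetric])
  qed
  have S2: "(\<Sum>\<alpha><N. (x \<alpha>)^2) = E2 + 2 * b * dd * E1 + dd^2 * (b * dd)^2"
  proof -
    have "(\<Sum>\<alpha><N. (x \<alpha>)^2) = (\<Sum>\<alpha><N. (e \<alpha>)^2 + 2 * b * dd * e \<alpha> + (b * dd)^2)"
      by (rule sum.cong) (auto simp: e_def algebra_simps power2_eq_square)
    thus ?thesis unfolding E1_def E2_def using rN by (simp add: sum.distrib sum_distrib_left)
  qed
  have kapab: "kap * (a - b) = 1" unfolding kap_def using ab by simp
  have kE1: "kap * E1 = dd" unfolding E1v k1 using kapab by (metis mult.left_commute mult.right_neutral)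
  have H2: "0 \<le> PP - kap * E2 - b * dd^2"
  proof -
    have "0 \<le> PP - 2 * (kap * (E2 + b * dd * E1)) + (b * (kap * E1)^2 + (a - b) * (kap^2 * E2))"
      using H unfolding QQ g1 g2 g3 .
    also have "(a - b) * (kap^2 * E2) = kap * E2" using kapab by (simp add: power2_eq_square algebra_simps)
    also have "kap * (E2 + b * dd * E1) = kap * E2 + b * dd * (kap * E1)" by (simp add: algebra_simps)
    finally show ?thesis unfolding kE1 by (simp add: power2_eq_square algebra_simps)
  qed
  have E2b: "E2 \<le> (a - b) * (PP - b * dd^2)"
  proof -
    have "kap * E2 \<le> PP - b * dd^2" using H2 by linarith
    hence "(a - b) * (kap * E2) \<le> (a - b) * (PP - b * dd^2)" using ab by (intro mult_left_mono) auto
    thus ?thesis using kapab by (simp add: algebra_simps)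
  qed
  have "(\<Sum>\<alpha><N. (x \<alpha>)^2) \<le> (a - b) * PP + b * dd"
  proof -
    have "(\<Sum>\<alpha><N. (x \<alpha>)^2) \<le> (a - b) * (PP - b * dd^2) + 2 * b * dd * (dd * (a - b)) + dd^2 * (b * dd)^2"
      unfolding S2 using E2b E1v k1 by simp
    also have "\<dots> = (a - b) * PP + b * dd^2 * (a - b + b * dd^2)" by (simp add: algebra_simps power2_eq_square)
    also have "\<dots> = (a - b) * PP + b * dd" unfolding k3 using dd2 by (simp add: power2_eq_square)
    finally show ?thesis .
  qed
  also have "\<dots> \<le> (a - b) + b * dd" using PP1 ab by (simp add: mult_left_le)
  also have "\<dots> = (a * real d ^ 2 + 1) / (real d * (real d + 1))" using k2 unfolding dd_def .
  finally have fin: "(\<Sum>\<alpha><N. (x \<alpha>)^2) \<le> (a * real d ^ 2 + 1) / (real d * (real d + 1))" .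
  have "(\<Sum>\<alpha><d^2. (cmod (mtrace (M \<alpha> * \<rho>)))^2) = (\<Sum>\<alpha><N. (x \<alpha>)^2)"
    unfolding N_def by (rule sum.cong) (auto simp: c_def[symmetric] creal)
  thus ?thesis using fin by simp
qed


lemma sum_split_add: fixes l n :: nat shows "(\<Sum>r<l+n. f r) = (\<Sum>r<l. f r) + (\<Sum>k<n. f (l + k))"
  by (induct n) (auto simp: add.assoc)

lemma sum_divmod: fixes a b :: nat shows "(\<Sum>r<a*b. f r) = (\<Sum>i<a. \<Sum>k<b. f (i*b + k))"
proof (induct a)
  case (Suc a)
  have "(\<Sum>r<Suc a * b. f r) = (\<Sum>r<a*b + b. f r)" by (simp add: add.commute)
  also have "\<dots> = (\<Sum>r<a*b. f r) + (\<Sum>k<b. f (a*b + k))" by (rule sum_split_add)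
  finally show ?case using Suc by simp
qed simp

lemma idx_bound: fixes i k a b :: nat assumes "i < a" "k < b" shows "i * b + k < a * b"
proof -
  have "i * b + k < i * b + b" using assms by simp
  also have "\<dots> = Suc i * b" by simp
  also have "\<dots> \<le> a * b" using assms by (intro mult_right_mono) auto
  finally show ?thesis .
qed

lemma kron_idx: assumes "A \<in> carrier_mat na na'" "B \<in> carrier_mat nb nb'" "r < na * nb" "c < na' * nb'"
  shows "kron A B $$ (r,c) = A $$ (r div nb, c div nb') * B $$ (r mod nb, c mod nb')"
  using assms unfolding kron_def by simp

lemma kron_carrier: assumes "A \<in> carrier_mat na na'" "B \<in> carrier_mat nb nb'"
  shows "kron A B \<in> carrier_mat (na * nb) (na' * nb')"
  using assms unfolding kron_def by simp

lemma mtrace_lin: assumes X: "X \<in> carrier_mat n n" and Y: "\<And>l. l < N \<Longrightarrow> Y l \<in> carrier_mat n n"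
  shows "mtrace (X * mat n n (\<lambda>(i,j). \<Sum>l<N. of_real (p l) * Y l $$ (i,j))) = (\<Sum>l<N. of_real (p l) * mtrace (X * Y l))"
proof -
  have "mtrace (X * mat n n (\<lambda>(i,j). \<Sum>l<N. of_real (p l) * Y l $$ (i,j)))
      = (\<Sum>i<n. \<Sum>j<n. X $$ (i,j) * (\<Sum>l<N. of_real (p l) * Y l $$ (j,i)))"
    by (subst mtrace_mult[OF X], auto)
  also have "\<dots> = (\<Sum>i<n. \<Sum>j<n. \<Sum>l<N. of_real (p l) * (X $$ (i,j) * Y l $$ (j,i)))"
    by (simp add: sum_distrib_left mult_ac)
  also have "\<dots> = (\<Sum>l<N. \<Sum>i<n. \<Sum>j<n. of_real (p l) * (X $$ (i,j) * Y l $$ (j,i)))" by (rule sum3_swap)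
  also have "\<dots> = (\<Sum>l<N. of_real (p l) * mtrace (X * Y l))"
    by (rule sum.cong[OF refl], subst mtrace_mult[OF X Y]) (auto simp: sum_distrib_left)
  finally show ?thesis .
qed

lemma mtrace_kron: assumes A: "A \<in> carrier_mat na na" and B: "B \<in> carrier_mat nb nb"
  and C: "C \<in> carrier_mat na na" and D: "D \<in> carrier_mat nb nb"
  shows "mtrace (kron A B * kron C D) = mtrace (A * C) * mtrace (B * D)"
proof -
  have K1: "kron A B \<in> carrier_mat (na*nb) (na*nb)" by (rule kron_carrier[OF A B])
  have K2: "kron C D \<in> carrier_mat (na*nb) (na*nb)" by (rule kron_carrier[OF C D])
  have "mtrace (kron A B * kron C D) = (\<Sum>r<na*nb. \<Sum>s<na*nb. kron A B $$ (r,s) * kron C D $$ (s,r))"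
    by (rule mtrace_mult[OF K1 K2])
  also have "\<dots> = (\<Sum>i<na. \<Sum>k<nb. \<Sum>j<na. \<Sum>k'<nb. (A $$ (i,j) * B $$ (k,k')) * (C $$ (j,i) * D $$ (k',k)))"
    unfolding sum_divmod
    by (intro sum.cong refl) (simp add: kron_idx[OF A B] kron_idx[OF C D] idx_bound)
  also have "\<dots> = (\<Sum>i<na. \<Sum>j<na. \<Sum>k<nb. \<Sum>k'<nb. (A $$ (i,j) * C $$ (j,i)) * (B $$ (k,k') * D $$ (k',k)))"
    by (rule sum.cong[OF refl], subst sum.swap) (simp add: mult_ac)
  also have "\<dots> = (\<Sum>i<na. \<Sum>j<na. A $$ (i,j) * C $$ (j,i)) * (\<Sum>k<nb. \<Sum>k'<nb. B $$ (k,k') * D $$ (k',k))"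
    unfolding sum_distrib_right unfolding sum_distrib_left ..
  also have "\<dots> = mtrace (A * C) * mtrace (B * D)" unfolding mtrace_mult[OF A C] mtrace_mult[OF B D] ..
  finally show ?thesis .
qed


lemma ptraceB_sep:
  assumes \<rho>e: "\<rho> = mat (dA*dB) (dA*dB) (\<lambda>(r,c). \<Sum>l<N. of_real (p l) * kron (\<rho>A l) (\<rho>B l) $$ (r,c))"
    and A: "\<And>l. l < N \<Longrightarrow> \<rho>A l \<in> carrier_mat dA dA" and B: "\<And>l. l < N \<Longrightarrow> \<rho>B l \<in> carrier_mat dB dB"
    and trB: "\<And>l. l < N \<Longrightarrow> mtrace (\<rho>B l) = 1"
  shows "ptrace_B dA dB \<rho> = mat dA dA (\<lambda>(i,j). \<Sum>l<N. of_real (p l) * \<rho>A l $$ (i,j))"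
proof (rule eq_matI)
  fix i j assume "i < dim_row (mat dA dA (\<lambda>(i,j). \<Sum>l<N. of_real (p l) * \<rho>A l $$ (i,j)))"
    "j < dim_col (mat dA dA (\<lambda>(i,j). \<Sum>l<N. of_real (p l) * \<rho>A l $$ (i,j)))"
  hence i: "i < dA" and j: "j < dA" by auto
  have "ptrace_B dA dB \<rho> $$ (i,j) = (\<Sum>k<dB. \<rho> $$ (i*dB+k, j*dB+k))"
    unfolding ptrace_B_def using i j by simp
  also have "\<dots> = (\<Sum>k<dB. \<Sum>l<N. of_real (p l) * (\<rho>A l $$ (i,j) * \<rho>B l $$ (k,k)))"
  proof (rule sum.cong[OF refl])
    fix k assume k: "k \<in> {..<dB}"
    have b1: "i*dB+k < dA*dB" "j*dB+k < dA*dB" using i j k by (auto intro: idx_bound)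
    show "\<rho> $$ (i*dB+k, j*dB+k) = (\<Sum>l<N. of_real (p l) * (\<rho>A l $$ (i,j) * \<rho>B l $$ (k,k)))"
      unfolding \<rho>e using b1 k by (auto intro!: sum.cong simp: kron_idx[OF A B])
  qed
  also have "\<dots> = (\<Sum>l<N. \<Sum>k<dB. of_real (p l) * (\<rho>A l $$ (i,j) * \<rho>B l $$ (k,k)))" by (rule sum.swap)
  also have "\<dots> = (\<Sum>l<N. of_real (p l) * \<rho>A l $$ (i,j) * mtrace (\<rho>B l))"
    by (rule sum.cong[OF refl]) (simp add: mtrace_sum[OF B] sum_distrib_left mult.assoc)
  also have "\<dots> = (\<Sum>l<N. of_real (p l) * \<rho>A l $$ (i,j))" by (rule sum.cong) (auto simp: trB)
  finally show "ptrace_B dA dB \<rho> $$ (i,j) = mat dA dA (\<lambda>(i,j). \<Sum>l<N. of_real (p l) * \<rho>A l $$ (i,j)) $$ (i,j)"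
    using i j by simp
qed (auto simp: ptrace_B_def)

lemma ptraceA_sep:
  assumes \<rho>e: "\<rho> = mat (dA*dB) (dA*dB) (\<lambda>(r,c). \<Sum>l<N. of_real (p l) * kron (\<rho>A l) (\<rho>B l) $$ (r,c))"
    and A: "\<And>l. l < N \<Longrightarrow> \<rho>A l \<in> carrier_mat dA dA" and B: "\<And>l. l < N \<Longrightarrow> \<rho>B l \<in> carrier_mat dB dB"
    and trA: "\<And>l. l < N \<Longrightarrow> mtrace (\<rho>A l) = 1"
  shows "ptrace_A dA dB \<rho> = mat dB dB (\<lambda>(i,j). \<Sum>l<N. of_real (p l) * \<rho>B l $$ (i,j))"
proof (rule eq_matI)
  fix i j assume "i < dim_row (mat dB dB (\<lambda>(i,j). \<Sum>l<N. of_real (p l) * \<rho>B l $$ (i,j)))"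
    "j < dim_col (mat dB dB (\<lambda>(i,j). \<Sum>l<N. of_real (p l) * \<rho>B l $$ (i,j)))"
  hence i: "i < dB" and j: "j < dB" by auto
  have "ptrace_A dA dB \<rho> $$ (i,j) = (\<Sum>k<dA. \<rho> $$ (k*dB+i, k*dB+j))"
    unfolding ptrace_A_def using i j by simp
  also have "\<dots> = (\<Sum>k<dA. \<Sum>l<N. of_real (p l) * (\<rho>A l $$ (k,k) * \<rho>B l $$ (i,j)))"
  proof (rule sum.cong[OF refl])
    fix k assume k: "k \<in> {..<dA}"
    have b1: "k*dB+i < dA*dB" "k*dB+j < dA*dB" using i j k by (auto intro: idx_bound)
    show "\<rho> $$ (k*dB+i, k*dB+j) = (\<Sum>l<N. of_real (p l) * (\<rho>A l $$ (k,k) * \<rho>B l $$ (i,j)))"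
      unfolding \<rho>e using b1 i j by (auto intro!: sum.cong simp: kron_idx[OF A B])
  qed
  also have "\<dots> = (\<Sum>l<N. \<Sum>k<dA. of_real (p l) * (\<rho>A l $$ (k,k) * \<rho>B l $$ (i,j)))" by (rule sum.swap)
  also have "\<dots> = (\<Sum>l<N. of_real (p l) * \<rho>B l $$ (i,j) * mtrace (\<rho>A l))"
    by (rule sum.cong[OF refl]) (simp add: mtrace_sum[OF A] sum_distrib_left sum_distrib_right mult_ac)
  also have "\<dots> = (\<Sum>l<N. of_real (p l) * \<rho>B l $$ (i,j))" by (rule sum.cong) (auto simp: trA)
  finally show "ptrace_A dA dB \<rho> $$ (i,j) = mat dB dB (\<lambda>(i,j). \<Sum>l<N. of_real (p l) * \<rho>B l $$ (i,j)) $$ (i,j)"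
    using i j by simp
qed (auto simp: ptrace_A_def)


theorem corollary1:
  fixes dA dB l :: nat and aA aB \<mu> \<nu> :: real
    and MA MB :: "nat \<Rightarrow> complex mat" and \<rho> :: "complex mat"
  assumes "is_GSICPOVM dA aA MA"
    and "is_GSICPOVM dB aB MB"
    and "0 < l"
    and "is_density (dA * dB) \<rho>"
    and "separable dA dB \<rho>"
  shows "trace_norm (Mmat l \<mu> \<nu> dA dB MA MB \<rho>)
     \<le> sqrt ((real l * \<mu>^2 + (aA * real dA ^ 2 + 1) / (real dA * (real dA + 1)))
            * (real l * \<nu>^2 + (aB * real dB ^ 2 + 1) / (real dB * (real dB + 1))))"
proof -
  note GA = assms(1) and GB = assms(2)
  from assms(5) obtain N :: nat and p \<rho>A \<rho>B where p0: "\<forall>i<N. 0 \<le> p i" and psum: "(\<Sum>i<N. p i) = 1"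
    and dens: "\<forall>i<N. is_density dA (\<rho>A i) \<and> is_density dB (\<rho>B i)"
    and \<rho>e: "\<rho> = mat (dA * dB) (dA * dB) (\<lambda>(r, c). \<Sum>i<N. complex_of_real (p i) * kron (\<rho>A i) (\<rho>B i) $$ (r, c))"
    unfolding separable_def by blast
  have Ac: "\<And>i. i < N \<Longrightarrow> \<rho>A i \<in> carrier_mat dA dA" and trA: "\<And>i. i < N \<Longrightarrow> mtrace (\<rho>A i) = 1"
    and Bc: "\<And>i. i < N \<Longrightarrow> \<rho>B i \<in> carrier_mat dB dB" and trB: "\<And>i. i < N \<Longrightarrow> mtrace (\<rho>B i) = 1"
    using dens unfolding is_density_def is_psd_def by auto
  have MAc: "\<And>\<alpha>. \<alpha> < dA^2 \<Longrightarrow> MA \<alpha> \<in> carrier_mat dA dA"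
    using GA unfolding is_GSICPOVM_def is_psd_def by auto
  have MBc: "\<And>\<beta>. \<beta> < dB^2 \<Longrightarrow> MB \<beta> \<in> carrier_mat dB dB"
    using GB unfolding is_GSICPOVM_def is_psd_def by auto
  define cA where "cA i \<alpha> = mtrace (MA \<alpha> * \<rho>A i)" for i \<alpha>
  define cB where "cB i \<beta> = mtrace (MB \<beta> * \<rho>B i)" for i \<beta>
  have PB: "ptrace_B dA dB \<rho> = mat dA dA (\<lambda>(i,j). \<Sum>l<N. of_real (p l) * \<rho>A l $$ (i,j))"
    by (rule ptraceB_sep[OF \<rho>e Ac Bc trB])
  have PA: "ptrace_A dA dB \<rho> = mat dB dB (\<lambda>(i,j). \<Sum>l<N. of_real (p l) * \<rho>B l $$ (i,j))"
    by (rule ptraceA_sep[OF \<rho>e Ac Bc trA])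
  have vs: "varsigma dA dB MA \<rho> $ \<alpha> = (\<Sum>i<N. of_real (p i) * cA i \<alpha>)" if \<alpha>: "\<alpha> < dA^2" for \<alpha>
  proof -
    have "varsigma dA dB MA \<rho> $ \<alpha> = mtrace (MA \<alpha> * ptrace_B dA dB \<rho>)" unfolding varsigma_def using \<alpha> by simp
    also have "\<dots> = (\<Sum>i<N. of_real (p i) * cA i \<alpha>)" unfolding PB cA_def by (rule mtrace_lin[OF MAc[OF \<alpha>] Ac])
    finally show ?thesis .
  qed
  have zt: "zeta dA dB MB \<rho> $ \<beta> = (\<Sum>i<N. of_real (p i) * cB i \<beta>)" if \<beta>: "\<beta> < dB^2" for \<beta>
  proof -
    have "zeta dA dB MB \<rho> $ \<beta> = mtrace (MB \<beta> * ptrace_A dA dB \<rho>)" unfolding zeta_def using \<beta> by simp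
    also have "\<dots> = (\<Sum>i<N. of_real (p i) * cB i \<beta>)" unfolding PA cB_def by (rule mtrace_lin[OF MBc[OF \<beta>] Bc])
    finally show ?thesis .
  qed
  have cg: "corrG dA dB MA MB \<rho> $$ (\<alpha>,\<beta>) = (\<Sum>i<N. of_real (p i) * (cA i \<alpha> * cB i \<beta>))"
    if \<alpha>: "\<alpha> < dA^2" and \<beta>: "\<beta> < dB^2" for \<alpha> \<beta>
  proof -
    have K: "kron (MA \<alpha>) (MB \<beta>) \<in> carrier_mat (dA*dB) (dA*dB)" by (rule kron_carrier[OF MAc[OF \<alpha>] MBc[OF \<beta>]])
    have "corrG dA dB MA MB \<rho> $$ (\<alpha>,\<beta>) = mtrace (kron (MA \<alpha>) (MB \<beta>) * \<rho>)"
      unfolding corrG_def using \<alpha> \<beta> by simp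
    also have "\<dots> = (\<Sum>i<N. of_real (p i) * mtrace (kron (MA \<alpha>) (MB \<beta>) * kron (\<rho>A i) (\<rho>B i)))"
      unfolding \<rho>e by (rule mtrace_lin[OF K]) (rule kron_carrier[OF Ac Bc])
    also have "\<dots> = (\<Sum>i<N. of_real (p i) * (cA i \<alpha> * cB i \<beta>))"
      by (rule sum.cong[OF refl]) (simp add: mtrace_kron[OF MAc[OF \<alpha>] MBc[OF \<beta>] Ac Bc] cA_def cB_def)
    finally show ?thesis .
  qed
  define m1 where "m1 = l + dA^2"
  define n1 where "n1 = l + dB^2"
  define u where "u i r = (if r < l then complex_of_real \<mu> else cA i (r - l))" for i r
  define w where "w i c = (if c < l then complex_of_real \<nu> else cB i (c - l))" for i c
  let ?M = "Mmat l \<mu> \<nu> dA dB MA MB \<rho>"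
  have dims: "dim_row ?M = m1" "dim_col ?M = n1"
    unfolding Mmat_def m1_def n1_def by (auto simp: Jmat_def omega_def corrG_def varsigma_def zeta_def)
  have Mc: "?M \<in> carrier_mat m1 n1" using dims by auto
  have psumc: "(\<Sum>i<N. complex_of_real (p i)) = 1" using psum by (metis of_real_1 of_real_sum)
  have Me: "?M $$ (r,c) = (\<Sum>i<N. of_real (p i) * (u i r * w i c))" if r: "r < m1" and c: "c < n1" for r c
  proof -
    have r': "r < l + dA^2" and c': "c < l + dB^2" using r c unfolding m1_def n1_def by auto
    show ?thesis
    proof (cases "r < l")
      case True
      show ?thesis
      proof (cases "c < l")
        case True
        have "?M $$ (r,c) = of_real (\<mu> * \<nu>)"
          unfolding Mmat_def using \<open>r < l\<close> True r' c'
          by (simp add: Jmat_def omega_def corrG_def varsigma_def zeta_def)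
        also have "\<dots> = (\<Sum>i<N. of_real (p i)) * of_real (\<mu> * \<nu>)" unfolding psumc by simp
        also have "\<dots> = (\<Sum>i<N. of_real (p i) * (u i r * w i c))"
          unfolding u_def w_def using \<open>r < l\<close> True by (simp add: sum_distrib_right)
        finally show ?thesis .
      next
        case False
        have "?M $$ (r,c) = of_real \<mu> * zeta dA dB MB \<rho> $ (c - l)"
          unfolding Mmat_def using \<open>r < l\<close> False r' c'
          by (simp add: Jmat_def omega_def corrG_def varsigma_def zeta_def)
        also have "\<dots> = (\<Sum>i<N. of_real (p i) * (u i r * w i c))"
          using zt[of "c - l"] c' False \<open>r < l\<close> unfolding u_def w_def
          by (auto simp: sum_distrib_left mult_ac)
        finally show ?thesis .
      qed
    next
      case False
      show ?thesis
      proof (cases "c < l")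
        case True
        have "?M $$ (r,c) = of_real \<nu> * varsigma dA dB MA \<rho> $ (r - l)"
          unfolding Mmat_def using \<open>\<not> r < l\<close> True r' c'
          by (simp add: Jmat_def omega_def corrG_def varsigma_def zeta_def)
        also have "\<dots> = (\<Sum>i<N. of_real (p i) * (u i r * w i c))"
          using vs[of "r - l"] r' False True unfolding u_def w_def
          by (auto simp: sum_distrib_left mult_ac)
        finally show ?thesis .
      next
        case False
        have "?M $$ (r,c) = corrG dA dB MA MB \<rho> $$ (r - l, c - l)"
          unfolding Mmat_def using \<open>\<not> r < l\<close> False r' c'
          by (simp add: Jmat_def omega_def corrG_def varsigma_def zeta_def)
        also have "\<dots> = (\<Sum>i<N. of_real (p i) * (u i r * w i c))"
          using cg[of "r - l" "c - l"] r' c' False \<open>\<not> r < l\<close> unfolding u_def w_def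
          by (auto simp: mult_ac)
        finally show ?thesis .
      qed
    qed
  qed
  have tb: "trace_norm ?M \<le> (\<Sum>i<N. p i * (sqrt (\<Sum>r<m1. (cmod (u i r))^2) * sqrt (\<Sum>c<n1. (cmod (w i c))^2)))"
    by (rule trace_bound[OF Mc Me]) (use p0 in auto)
  define KA where "KA = real l * \<mu>^2 + (aA * real dA ^ 2 + 1) / (real dA * (real dA + 1))"
  define KB where "KB = real l * \<nu>^2 + (aB * real dB ^ 2 + 1) / (real dB * (real dB + 1))"
  have uA: "(\<Sum>r<m1. (cmod (u i r))^2) \<le> KA" if i: "i < N" for i
  proof -
    have "(\<Sum>r<m1. (cmod (u i r))^2) = (\<Sum>r<l. (cmod (u i r))^2) + (\<Sum>k<dA^2. (cmod (u i (l + k)))^2)"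
      unfolding m1_def by (rule sum_split_add)
    also have "(\<Sum>r<l. (cmod (u i r))^2) = real l * \<mu>^2" unfolding u_def by simp
    also have "(\<Sum>k<dA^2. (cmod (u i (l + k)))^2) = (\<Sum>\<alpha><dA^2. (cmod (mtrace (MA \<alpha> * \<rho>A i)))^2)"
      unfolding u_def cA_def by simp
    also have "\<dots> \<le> (aA * real dA ^ 2 + 1) / (real dA * (real dA + 1))"
      by (rule gsic_bound[OF GA]) (use dens i in auto)
    finally show ?thesis unfolding KA_def by simp
  qed
  have wB: "(\<Sum>c<n1. (cmod (w i c))^2) \<le> KB" if i: "i < N" for i
  proof -
    have "(\<Sum>c<n1. (cmod (w i c))^2) = (\<Sum>c<l. (cmod (w i c))^2) + (\<Sum>k<dB^2. (cmod (w i (l + k)))^2)"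
      unfolding n1_def by (rule sum_split_add)
    also have "(\<Sum>c<l. (cmod (w i c))^2) = real l * \<nu>^2" unfolding w_def by simp
    also have "(\<Sum>k<dB^2. (cmod (w i (l + k)))^2) = (\<Sum>\<beta><dB^2. (cmod (mtrace (MB \<beta> * \<rho>B i)))^2)"
      unfolding w_def cB_def by simp
    also have "\<dots> \<le> (aB * real dB ^ 2 + 1) / (real dB * (real dB + 1))"
      by (rule gsic_bound[OF GB]) (use dens i in auto)
    finally show ?thesis unfolding KB_def by simp
  qed
  have "(\<Sum>i<N. p i * (sqrt (\<Sum>r<m1. (cmod (u i r))^2) * sqrt (\<Sum>c<n1. (cmod (w i c))^2)))
      \<le> (\<Sum>i<N. p i * (sqrt KA * sqrt KB))"
  proof (rule sum_mono, rule mult_left_mono)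
    fix i assume i: "i \<in> {..<N}"
    show "0 \<le> p i" using p0 i by auto
    have "0 \<le> (\<Sum>r<m1. (cmod (u i r))^2)" by (auto intro: sum_nonneg)
    hence KA0: "0 \<le> KA" using uA i by force
    show "sqrt (\<Sum>r<m1. (cmod (u i r))^2) * sqrt (\<Sum>c<n1. (cmod (w i c))^2) \<le> sqrt KA * sqrt KB"
      by (rule mult_mono) (use uA wB i KA0 in \<open>auto intro: sum_nonneg\<close>)
  qed
  also have "\<dots> = sqrt KA * sqrt KB" unfolding sum_distrib_right[symmetric] psum by simp
  also have "\<dots> = sqrt (KA * KB)" by (simp add: real_sqrt_mult)
  finally show ?thesis using tb unfolding KA_def KB_def by simp
qed


end
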